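(* (Type safety of DCC.) If $\Delta;\cdot\vdash M:A$ in DCC, then $\Delta\vdash M\triangleright^* v$ for some irreducible value $v$.
   Context: DCC (Defunctionalized Calculus of Constructions): expressions $A,B,L,M,N::=x\mid U_i\mid\Pi x{:}A.B\mid L@M\mid\ell_i\{\overline M\}$, where $\ell_i$ ($i\in\mathbb N$) are label names disjoint from variables and $\overline M=M_1,\dots,M_n$ ($n\ge0$). Type contexts $\Gamma::=\cdot\mid\Gamma,x{:}A$; label contexts $\Delta::=\cdot\mid\Delta,\ell_i(\{\overline x{:}\overline A\},x{:}A\mapsto M:B)$ recording a free-variable telescope, an argument, a body and a result type. Substitution is standard with $\ell\{\overline M\}[N/x]=\ell\{\overline{M[N/x]}\}$; $[\overline M/\overline x]=[M_1/x_1,\dots,M_n/x_n]$. The only reduction rule: $\Delta\vdash\ell\{\overline M\}@N\triangleright L[\overline M/\overline x,N/x]$ when $\ell(\{\overline x{:}\overline A\},x{:}A\mapsto L:B)\in\Delta$; $\triangleright^*$ is zero or more steps. Equivalence $\Delta\vdash M\equiv N$: common reduct; or $\Delta\vdash L\triangleright^*\ell\{\overline N\}$, $\Delta\vdash M\triangleright^*M'$, $\ell(\{\overline x{:}\overline A\},x{:}A\mapsto N:B)\in\Delta$, $\Delta\vdash N[\overline N/\overline x]\equiv M'@x$ give $\Delta\vdash L\equiv M$; or symmetrically. Typing $\Delta;\Gamma\vdash M:A$ and formation $\vdash\Delta;\Gamma$ (mutual): variables ($x{:}A\in\Gamma$, $\vdash\Delta;\Gamma$), $U_i:U_{i+1}$,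 $\Pi x{:}A.B:U_{\max(i,j)}$ when $A:U_i$ and $B:U_j$ under $x{:}A$, application $M@N:B[N/x]$ when $M:\Pi x{:}A.B$ and $N:A$, conversion along $\equiv$ to a type $B:U_i$, and labels: if $\vdash\Delta;\Gamma$, $\ell(\{\overline x{:}\overline A\},x{:}A\mapsto M:B)\in\Delta$, $|\overline M|=|\overline x|$ and $\Delta;\Gamma\vdash M_k:A_k[M_1/x_1,\dots,M_{k-1}/x_{k-1}]$ for all $k$, then $\Delta;\Gamma\vdash\ell\{\overline M\}:\Pi x{:}A[\overline M/\overline x].B[\overline M/\overline x]$. Formation: $\vdash\cdot;\cdot$; a fresh label entry $\ell(\{\overline x{:}\overline A\},x{:}A\mapsto M:B)$ may be added when $\Delta;\overline x{:}\overline A\vdash\Pi x{:}A.B:U_i$ and $\Delta;\overline x{:}\overline A,x{:}A\vdash M:B$; $\vdash\Delta;\Gamma$ and $\Delta;\Gamma\vdash A:U_i$ give $\vdash\Delta;\Gamma,x{:}A$. *)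

theory Defs
  imports Main
begin

datatype trm =
    Var nat
  | U nat
  | Pi trm trm           (* Pi x:A. B ; B binds index 0 *)
  | App trm trm
  | Lab nat "trm list"

primrec ren :: "(nat \<Rightarrow> nat) \<Rightarrow> trm \<Rightarrow> trm" where
  "ren f (Var i) = Var (f i)"
| "ren f (U i) = U i"
| "ren f (Pi A B) = Pi (ren f A) (ren (\<lambda>j. case j of 0 \<Rightarrow> 0 | Suc k \<Rightarrow> Suc (f k)) B)"
| "ren f (App M N) = App (ren f M) (ren f N)"
| "ren f (Lab l Ms) = Lab l (map (ren f) Ms)"

definition lift :: "trm \<Rightarrow> trm" where
  "lift = ren Suc"

definition up :: "(nat \<Rightarrow> trm) \<Rightarrow> nat \<Rightarrow> trm" where
  "up \<sigma> = (\<lambda>j. case j of 0 \<Rightarrow> Var 0 | Suc k \<Rightarrow> lift (\<sigma> k))"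

primrec subst :: "(nat \<Rightarrow> trm) \<Rightarrow> trm \<Rightarrow> trm" where
  "subst \<sigma> (Var i) = \<sigma> i"
| "subst \<sigma> (U i) = U i"
| "subst \<sigma> (Pi A B) = Pi (subst \<sigma> A) (subst (up \<sigma>) B)"
| "subst \<sigma> (App M N) = App (subst \<sigma> M) (subst \<sigma> N)"
| "subst \<sigma> (Lab l Ms) = Lab l (map (subst \<sigma>) Ms)"

text \<open>Simultaneous substitution [M_1/x_1,...,M_n/x_n] for a telescope x_1,...,x_n
  (x_n is the innermost variable, i.e. de Bruijn index 0).\<close>
definition inst :: "trm list \<Rightarrow> nat \<Rightarrow> trm" where
  "inst Ms = (\<lambda>j. if j < length Ms then rev Ms ! j else Var (j - length Ms))"

text \<open>Label contexts: entries (l, telescope types A_1..A_n, argument type A, body M, result type B).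
  The telescope type A_k lives in the context x_1..x_(k-1); A in x_1..x_n;
  M and B in x_1..x_n,x.\<close>
type_synonym lctx = "(nat \<times> trm list \<times> trm \<times> trm \<times> trm) list"

text \<open>Type contexts: lists of types, head = most recently bound variable (index 0).\<close>
type_synonym tctx = "trm list"

inductive red :: "lctx \<Rightarrow> trm \<Rightarrow> trm \<Rightarrow> bool" where
  beta: "(l, As, A, L, B) \<in> set \<Delta> \<Longrightarrow> length Ms = length As \<Longrightarrow>
         red \<Delta> (App (Lab l Ms) N) (subst (inst (Ms @ [N])) L)"
| piL: "red \<Delta> A A' \<Longrightarrow> red \<Delta> (Pi A B) (Pi A' B)"
| piR: "red \<Delta> B B' \<Longrightarrow> red \<Delta> (Pi A B) (Pi A B')"
| appL: "red \<Delta> M M' \<Longrightarrow> red \<Delta> (App M N) (App M' N)"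
| appR: "red \<Delta> N N' \<Longrightarrow> red \<Delta> (App M N) (App M N')"
| lab: "k < length Ms \<Longrightarrow> red \<Delta> (Ms ! k) M' \<Longrightarrow> red \<Delta> (Lab l Ms) (Lab l (Ms[k := M']))"

definition reds :: "lctx \<Rightarrow> trm \<Rightarrow> trm \<Rightarrow> bool" where
  "reds \<Delta> = (red \<Delta>)\<^sup>*\<^sup>*"

inductive equiv :: "lctx \<Rightarrow> trm \<Rightarrow> trm \<Rightarrow> bool" where
  common: "reds \<Delta> M L \<Longrightarrow> reds \<Delta> N L \<Longrightarrow> equiv \<Delta> M N"
| eta1: "reds \<Delta> L (Lab l Ns) \<Longrightarrow> reds \<Delta> M M' \<Longrightarrow> (l, As, A, N, B) \<in> set \<Delta> \<Longrightarrow>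
         equiv \<Delta> (subst (up (inst Ns)) N) (App (lift M') (Var 0)) \<Longrightarrow> equiv \<Delta> L M"
| eta2: "reds \<Delta> L (Lab l Ns) \<Longrightarrow> reds \<Delta> M M' \<Longrightarrow> (l, As, A, N, B) \<in> set \<Delta> \<Longrightarrow>
         equiv \<Delta> (subst (up (inst Ns)) N) (App (lift M') (Var 0)) \<Longrightarrow> equiv \<Delta> M L"

inductive typing :: "lctx \<Rightarrow> tctx \<Rightarrow> trm \<Rightarrow> trm \<Rightarrow> bool"
  and wf :: "lctx \<Rightarrow> tctx \<Rightarrow> bool" where
  t_var: "i < length \<Gamma> \<Longrightarrow> wf \<Delta> \<Gamma> \<Longrightarrow> typing \<Delta> \<Gamma> (Var i) (ren (\<lambda>j. j + Suc i) (\<Gamma> ! i))"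
| t_univ: "wf \<Delta> \<Gamma> \<Longrightarrow> typing \<Delta> \<Gamma> (U i) (U (Suc i))"
| t_pi: "typing \<Delta> \<Gamma> A (U i) \<Longrightarrow> typing \<Delta> (A # \<Gamma>) B (U j) \<Longrightarrow>
         typing \<Delta> \<Gamma> (Pi A B) (U (max i j))"
| t_app: "typing \<Delta> \<Gamma> M (Pi A B) \<Longrightarrow> typing \<Delta> \<Gamma> N A \<Longrightarrow>
          typing \<Delta> \<Gamma> (App M N) (subst (inst [N]) B)"
| t_conv: "typing \<Delta> \<Gamma> M A \<Longrightarrow> equiv \<Delta> A B \<Longrightarrow> typing \<Delta> \<Gamma> B (U i) \<Longrightarrow>
           typing \<Delta> \<Gamma> M B"
| t_lab: "wf \<Delta> \<Gamma> \<Longrightarrow> (l, As, A, L, B) \<in> set \<Delta> \<Longrightarrow> length Ms = length As \<Longrightarrow>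
          (\<forall>k < length Ms. typing \<Delta> \<Gamma> (Ms ! k) (subst (inst (take k Ms)) (As ! k))) \<Longrightarrow>
          typing \<Delta> \<Gamma> (Lab l Ms) (Pi (subst (inst Ms) A) (subst (up (inst Ms)) B))"
| wf_empty: "wf [] []"
| wf_lab: "l \<notin> fst ` set \<Delta> \<Longrightarrow> typing \<Delta> (rev As) (Pi A B) (U i) \<Longrightarrow>
           typing \<Delta> (A # rev As) L B \<Longrightarrow> wf (\<Delta> @ [(l, As, A, L, B)]) []"
| wf_var: "wf \<Delta> \<Gamma> \<Longrightarrow> typing \<Delta> \<Gamma> A (U i) \<Longrightarrow> wf \<Delta> (A # \<Gamma>)"

definition is_value :: "trm \<Rightarrow> bool" where
  "is_value v \<longleftrightarrow> (\<exists>i. v = U i) \<or> (\<exists>A B. v = Pi A B) \<or> (\<exists>l Ms. v = Lab l Ms)"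

definition irreducible :: "lctx \<Rightarrow> trm \<Rightarrow> bool" where
  "irreducible \<Delta> M \<longleftrightarrow> \<not> (\<exists>N. red \<Delta> M N)"

end

theory Submission
  imports Defs
begin



definition scons :: "trm \<Rightarrow> (nat \<Rightarrow> trm) \<Rightarrow> nat \<Rightarrow> trm" where
  "scons a \<sigma> = (\<lambda>j. case j of 0 \<Rightarrow> a | Suc k \<Rightarrow> \<sigma> k)"

definition liftr :: "(nat \<Rightarrow> nat) \<Rightarrow> nat \<Rightarrow> nat" where
  "liftr f = (\<lambda>j. case j of 0 \<Rightarrow> 0 | Suc k \<Rightarrow> Suc (f k))"

lemma ren_Pi'[simp]: "ren f (Pi A B) = Pi (ren f A) (ren (liftr f) B)"
  by (simp add: liftr_def)
declare ren.simps(3)[simp del]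

lemma scons_0[simp]: "scons a \<sigma> 0 = a" and scons_Suc[simp]: "scons a \<sigma> (Suc k) = \<sigma> k"
  by (auto simp: scons_def)

lemma up_0[simp]: "up \<sigma> 0 = Var 0" and up_Suc[simp]: "up \<sigma> (Suc k) = lift (\<sigma> k)"
  by (auto simp: up_def)

lemma liftr_0[simp]: "liftr f 0 = 0" and liftr_Suc[simp]: "liftr f (Suc k) = Suc (f k)"
  by (auto simp: liftr_def)

lemma ren_ren: "ren f (ren g M) = ren (f \<circ> g) M"
proof (induction M arbitrary: f g)
  case (Pi A B)
  have h: "liftr f \<circ> liftr g = liftr (f \<circ> g)" by (auto simp: fun_eq_iff liftr_def split: nat.splits)
  show ?case by (simp only: ren_Pi' Pi.IH h)
qed auto

lemma ren_id: "ren (\<lambda>x. x) M = M"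
proof (induction M)
  case (Pi A B)
  have h: "liftr (\<lambda>x. x) = (\<lambda>x. x)" by (auto simp: fun_eq_iff liftr_def split: nat.splits)
  show ?case by (simp only: ren_Pi' Pi.IH h)
qed (auto simp: map_idI)

lemma ren_subst_Var: "ren f M = subst (Var \<circ> f) M"
proof (induction M arbitrary: f)
  case (Pi A B)
  have h: "up (Var \<circ> f) = Var \<circ> liftr f" by (auto simp: fun_eq_iff up_def lift_def split: nat.splits)
  show ?case by (simp only: ren_Pi' subst.simps(3) Pi.IH h)
qed auto

lemma ren_subst_Var_fun: "ren f = subst (Var \<circ> f)"
  using ren_subst_Var by blast

lemma subst_ren: "subst \<sigma> (ren f M) = subst (\<sigma> \<circ> f) M"
proof (induction M arbitrary: f \<sigma>)
  case (Pi A B)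
  have h: "up \<sigma> \<circ> liftr f = up (\<sigma> \<circ> f)" by (auto simp: fun_eq_iff up_def split: nat.splits)
  show ?case by (simp only: ren_Pi' subst.simps(3) Pi.IH h)
qed auto

lemma ren_subst: "ren f (subst \<sigma> M) = subst (ren f \<circ> \<sigma>) M"
proof (induction M arbitrary: f \<sigma>)
  case (Pi A B)
  have h: "ren (liftr f) \<circ> up \<sigma> = up (ren f \<circ> \<sigma>)"
  proof
    fix a show "(ren (liftr f) \<circ> up \<sigma>) a = up (ren f \<circ> \<sigma>) a"
      by (cases a) (simp_all add: lift_def ren_ren comp_def)
  qed
  show ?case by (simp only: ren_Pi' subst.simps(3) Pi.IH h)
qed auto

lemma up_comp: "subst (up \<sigma>) \<circ> up \<tau> = up (subst \<sigma> \<circ> \<tau>)"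
proof
  fix a show "(subst (up \<sigma>) \<circ> up \<tau>) a = up (subst \<sigma> \<circ> \<tau>) a"
    by (cases a) (simp_all add: lift_def subst_ren ren_subst comp_def)
qed

lemma subst_subst: "subst \<sigma> (subst \<tau> M) = subst (subst \<sigma> \<circ> \<tau>) M"
proof (induction M arbitrary: \<sigma> \<tau>)
  case (Pi A B)
  show ?case by (simp only: subst.simps(3) Pi.IH up_comp)
qed auto

lemma subst_Var: "subst Var M = M"
proof (induction M)
  case (Pi A B)
  have h: "up Var = Var" by (auto simp: fun_eq_iff up_def lift_def split: nat.splits)
  show ?case by (simp only: subst.simps(3) Pi.IH h)
qed (auto simp: map_idI)

lemma subst_Var': "subst (\<lambda>x. Var x) M = M"
  using subst_Var by (simp add: eta_contract_eq)

lemma inst_Nil: "inst [] = Var"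
  by (auto simp: inst_def fun_eq_iff)

lemma inst_snoc: "inst (Ms @ [N]) = scons N (inst Ms)"
proof
  fix j show "inst (Ms @ [N]) j = scons N (inst Ms) j"
    by (cases j) (simp_all add: inst_def nth_append)
qed

lemma inst_single: "inst [a] = scons a Var"
  using inst_snoc[of "[]" a] by (simp add: inst_Nil)

lemma inst_lt: "j < length Ms \<Longrightarrow> inst Ms j = rev Ms ! j"
  by (simp add: inst_def)

lemma subst_inst_up: "subst (inst [a]) (subst (up \<sigma>) B) = subst (scons a \<sigma>) B"
proof -
  have "subst (inst [a]) \<circ> up \<sigma> = scons a \<sigma>"
  proof
    fix j show "(subst (inst [a]) \<circ> up \<sigma>) j = scons a \<sigma> j"
      by (cases j) (simp_all add: inst_single lift_def subst_ren comp_def subst_Var')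
  qed
  then show ?thesis by (simp only: subst_subst)
qed

lemma subst_inst_single: "subst \<sigma> (subst (inst [N]) B) = subst (scons (subst \<sigma> N) \<sigma>) B"
proof -
  have "subst \<sigma> \<circ> inst [N] = scons (subst \<sigma> N) \<sigma>"
  proof
    fix j show "(subst \<sigma> \<circ> inst [N]) j = scons (subst \<sigma> N) \<sigma> j"
      by (cases j) (simp_all add: inst_single)
  qed
  then show ?thesis by (simp only: subst_subst)
qed

lemma subst_scons_ren: "subst (scons a \<sigma>) (ren (\<lambda>j. j + Suc i) X) = subst (\<lambda>j. \<sigma> (j + i)) X"
  by (simp add: subst_ren comp_def)

primrec closedn :: "nat \<Rightarrow> trm \<Rightarrow> bool" where
  "closedn k (Var i) = (i < k)"
| "closedn k (U i) = True"
| "closedn k (Pi A B) = (closedn k A \<and> closedn (Suc k) B)"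
| "closedn k (App M N) = (closedn k M \<and> closedn k N)"
| "closedn k (Lab l Ms) = list_all (closedn k) Ms"

lemma closedn_Lab[simp]: "closedn k (Lab l Ms) = (\<forall>M\<in>set Ms. closedn k M)"
  by (simp add: list_all_iff)
declare closedn.simps(5)[simp del]

lemma subst_closed_cong: "closedn k M \<Longrightarrow> (\<And>j. j < k \<Longrightarrow> \<sigma> j = \<tau> j) \<Longrightarrow> subst \<sigma> M = subst \<tau> M"
proof (induction M arbitrary: k \<sigma> \<tau>)
  case (Pi A B)
  have A: "subst \<sigma> A = subst \<tau> A" using Pi.IH(1)[of k \<sigma> \<tau>] Pi.prems by simp
  have "\<And>j. j < Suc k \<Longrightarrow> up \<sigma> j = up \<tau> j" using Pi.prems(2) by (auto simp: up_def split: nat.splits)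
  then have B: "subst (up \<sigma>) B = subst (up \<tau>) B" using Pi.IH(2)[of "Suc k" "up \<sigma>" "up \<tau>"] Pi.prems(1) by simp
  show ?case by (simp only: subst.simps(3) A B)
next
  case (App M N) then show ?case using App.IH[of k \<sigma> \<tau>] by simp
next
  case (Lab l Ms)
  have "\<forall>x\<in>set Ms. subst \<sigma> x = subst \<tau> x" using Lab.IH[of _ k \<sigma> \<tau>] Lab.prems by simp
  then show ?case by simp
qed auto

lemma ren_closed: "closedn k M \<Longrightarrow> (\<And>j. j < k \<Longrightarrow> f j < m) \<Longrightarrow> closedn m (ren f M)"
proof (induction M arbitrary: k m f)
  case (Pi A B)
  have "\<And>j. j < Suc k \<Longrightarrow> liftr f j < Suc m" using Pi.prems(2) by (auto simp: liftr_def split: nat.splits)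
  then have "closedn (Suc m) (ren (liftr f) B)" using Pi.IH(2)[of "Suc k" "liftr f" "Suc m"] Pi.prems(1) by simp
  moreover have "closedn m (ren f A)" using Pi.IH(1)[of k f m] Pi.prems by simp
  ultimately show ?case by simp
qed auto

lemma subst_closed: "closedn k M \<Longrightarrow> (\<And>j. j < k \<Longrightarrow> closedn m (\<sigma> j)) \<Longrightarrow> closedn m (subst \<sigma> M)"
proof (induction M arbitrary: k m \<sigma>)
  case (Pi A B)
  have "\<And>j. j < Suc k \<Longrightarrow> closedn (Suc m) (up \<sigma> j)" using Pi.prems(2)
    by (auto simp: up_def lift_def split: nat.splits intro!: ren_closed)
  then have "closedn (Suc m) (subst (up \<sigma>) B)" using Pi.IH(2)[of "Suc k" "Suc m" "up \<sigma>"] Pi.prems(1) by simp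
  moreover have "closedn m (subst \<sigma> A)" using Pi.IH(1)[of k m \<sigma>] Pi.prems by simp
  ultimately show ?case by simp
qed auto




lemma red_mono: "red \<Delta>' M N \<Longrightarrow> set \<Delta>' \<subseteq> set \<Delta> \<Longrightarrow> red \<Delta> M N"
proof (induction rule: red.induct)
  case (beta l As A L B \<Delta>' Ms N)
  then show ?case by (intro red.beta) auto
next
  case (lab k Ms \<Delta>' M' l) then show ?case by (intro red.lab) auto
qed (simp_all add: red.piL red.piR red.appL red.appR)

lemma reds_mono: "reds \<Delta>' M N \<Longrightarrow> set \<Delta>' \<subseteq> set \<Delta> \<Longrightarrow> reds \<Delta> M N"
  unfolding reds_def
proof (induction rule: rtranclp_induct)
  case (step y z) then show ?case using red_mono[of \<Delta>' y z \<Delta>] by (meson rtranclp.rtrancl_into_rtrancl)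
qed simp

lemma reds_refl[simp]: "reds \<Delta> M M" by (simp add: reds_def)
lemma reds_trans: "reds \<Delta> M N \<Longrightarrow> reds \<Delta> N P \<Longrightarrow> reds \<Delta> M P" by (simp add: reds_def)
lemma red_reds: "red \<Delta> M N \<Longrightarrow> reds \<Delta> M N" by (simp add: reds_def)
lemma reds_step: "reds \<Delta> M N \<Longrightarrow> red \<Delta> N P \<Longrightarrow> reds \<Delta> M P" by (simp add: reds_def)
lemma reds_stepl: "red \<Delta> M N \<Longrightarrow> reds \<Delta> N P \<Longrightarrow> reds \<Delta> M P"
  by (simp add: reds_def converse_rtranclp_into_rtranclp)

lemma reds_induct[consumes 1, case_names refl step]:
  "reds \<Delta> M N \<Longrightarrow> P M \<Longrightarrow> (\<And>y z. reds \<Delta> M y \<Longrightarrow> red \<Delta> y z \<Longrightarrow> P y \<Longrightarrow> P z) \<Longrightarrow> P N"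
  unfolding reds_def by (induction rule: rtranclp_induct) auto

lemma reds_piL: "reds \<Delta> A A' \<Longrightarrow> reds \<Delta> (Pi A B) (Pi A' B)"
  by (induction rule: reds_induct) (auto intro: reds_step red.piL)
lemma reds_piR: "reds \<Delta> B B' \<Longrightarrow> reds \<Delta> (Pi A B) (Pi A B')"
  by (induction rule: reds_induct) (auto intro: reds_step red.piR)
lemma reds_Pi: "reds \<Delta> A A' \<Longrightarrow> reds \<Delta> B B' \<Longrightarrow> reds \<Delta> (Pi A B) (Pi A' B')"
  by (meson reds_piL reds_piR reds_trans)
lemma reds_appL: "reds \<Delta> A A' \<Longrightarrow> reds \<Delta> (App A B) (App A' B)"
  by (induction rule: reds_induct) (auto intro: reds_step red.appL)
lemma reds_appR: "reds \<Delta> B B' \<Longrightarrow> reds \<Delta> (App A B) (App A B')"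
  by (induction rule: reds_induct) (auto intro: reds_step red.appR)
lemma reds_App: "reds \<Delta> A A' \<Longrightarrow> reds \<Delta> B B' \<Longrightarrow> reds \<Delta> (App A B) (App A' B')"
  by (meson reds_appL reds_appR reds_trans)

lemma reds_lab1: "reds \<Delta> M M' \<Longrightarrow> k < length Ms \<Longrightarrow> Ms ! k = M \<Longrightarrow> reds \<Delta> (Lab l Ms) (Lab l (Ms[k := M']))"
proof (induction rule: reds_induct)
  case refl then show ?case by (metis list_update_id reds_refl)
next
  case (step y z)
  then have "reds \<Delta> (Lab l Ms) (Lab l (Ms[k := y]))" by simp
  moreover have "red \<Delta> (Lab l (Ms[k := y])) (Lab l ((Ms[k := y])[k := z]))"
    using step by (intro red.lab) auto
  ultimately show ?case by (auto intro: reds_step)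
qed

lemma reds_Lab_aux: "list_all2 (reds \<Delta>) Ms Ms' \<Longrightarrow> reds \<Delta> (Lab l (xs @ Ms)) (Lab l (xs @ Ms'))"
proof (induction Ms Ms' arbitrary: xs rule: list_all2_induct)
  case Nil then show ?case by simp
next
  case (Cons x Ms y Ms')
  have "reds \<Delta> (Lab l (xs @ x # Ms)) (Lab l ((xs @ x # Ms)[length xs := y]))"
    using Cons by (intro reds_lab1) auto
  moreover have "(xs @ x # Ms)[length xs := y] = (xs @ [y]) @ Ms" by simp
  moreover have "reds \<Delta> (Lab l ((xs @ [y]) @ Ms)) (Lab l ((xs @ [y]) @ Ms'))" using Cons.IH .
  ultimately show ?case by (auto intro: reds_trans)
qed

lemma reds_Lab: "list_all2 (reds \<Delta>) Ms Ms' \<Longrightarrow> reds \<Delta> (Lab l Ms) (Lab l Ms')"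
  using reds_Lab_aux[where xs="[]"] by simp

lemma subst_beta:
  assumes "closedn (Suc (length Ms)) L"
  shows "subst \<sigma> (subst (inst (Ms @ [N])) L) = subst (inst (map (subst \<sigma>) Ms @ [subst \<sigma> N])) L"
proof -
  have "subst \<sigma> (subst (inst (Ms @ [N])) L) = subst (subst \<sigma> \<circ> inst (Ms @ [N])) L" by (simp add: subst_subst)
  also have "\<dots> = subst (inst (map (subst \<sigma>) Ms @ [subst \<sigma> N])) L"
  proof (rule subst_closed_cong[OF assms])
    fix j assume j: "j < Suc (length Ms)"
    have e: "subst \<sigma> N # rev (map (subst \<sigma>) Ms) = map (subst \<sigma>) (N # rev Ms)" by (simp add: rev_map)
    show "(subst \<sigma> \<circ> inst (Ms @ [N])) j = inst (map (subst \<sigma>) Ms @ [subst \<sigma> N]) j"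
      using j by (simp add: inst_lt e del: list.map rev_map)
  qed
  finally show ?thesis .
qed

definition goodD :: "lctx \<Rightarrow> bool" where
  "goodD \<Delta> \<longleftrightarrow> distinct (map fst \<Delta>) \<and> (\<forall>(l, As, A, L, B) \<in> set \<Delta>. closedn (Suc (length As)) L)"

lemma red_subst: "red \<Delta> M N \<Longrightarrow> goodD \<Delta> \<Longrightarrow> red \<Delta> (subst \<sigma> M) (subst \<sigma> N)"
proof (induction arbitrary: \<sigma> rule: red.induct)
  case (beta l As A L B \<Delta> Ms N)
  then have c: "closedn (Suc (length Ms)) L" by (auto simp: goodD_def)
  show ?case using beta by (auto simp: subst_beta[OF c] intro!: red.beta)
next
  case (lab k Ms \<Delta> M' l)
  then show ?case by (auto simp: map_update intro!: red.lab)
qed (auto intro: red.intros)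

lemma reds_subst: "reds \<Delta> M N \<Longrightarrow> goodD \<Delta> \<Longrightarrow> reds \<Delta> (subst \<sigma> M) (subst \<sigma> N)"
  by (induction rule: reds_induct) (auto intro: reds_step red_subst)

lemma ren_eq_App: "ren f M = App X Y \<longleftrightarrow> (\<exists>a b. M = App a b \<and> X = ren f a \<and> Y = ren f b)"
  by (cases M) auto
lemma ren_eq_Lab: "ren f M = Lab l Xs \<longleftrightarrow> (\<exists>Ms. M = Lab l Ms \<and> Xs = map (ren f) Ms)"
  by (cases M) auto
lemma eq_ren_App: "App X Y = ren f M \<longleftrightarrow> (\<exists>a b. M = App a b \<and> X = ren f a \<and> Y = ren f b)"
  by (cases M) auto
lemma eq_ren_Lab: "Lab l Xs = ren f M \<longleftrightarrow> (\<exists>Ms. M = Lab l Ms \<and> Xs = map (ren f) Ms)"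
  by (cases M) auto
lemma eq_ren_Pi: "Pi X Y = ren f M \<longleftrightarrow> (\<exists>a b. M = Pi a b \<and> X = ren f a \<and> Y = ren (liftr f) b)"
  by (cases M) auto
lemma ren_eq_Pi: "ren f M = Pi X Y \<longleftrightarrow> (\<exists>a b. M = Pi a b \<and> X = ren f a \<and> Y = ren (liftr f) b)"
  by (cases M) auto

lemma red_ren_reflect:
  "red \<Delta> X N' \<Longrightarrow> ren f M = X \<Longrightarrow> goodD \<Delta> \<Longrightarrow> \<exists>N. red \<Delta> M N \<and> N' = ren f N"
proof (induction arbitrary: M f rule: red.induct)
  case (beta l As A L B \<Delta> Ms0 N0)
  then obtain Ms N where M: "M = App (Lab l Ms) N" and Ms0: "Ms0 = map (ren f) Ms" and N0: "N0 = ren f N"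
    by (auto simp: ren_eq_App ren_eq_Lab eq_ren_App eq_ren_Lab)
  have c: "closedn (Suc (length Ms)) L" using beta Ms0 by (auto simp: goodD_def)
  have "ren f (subst (inst (Ms @ [N])) L) = subst (inst (map (subst (Var \<circ> f)) Ms @ [subst (Var \<circ> f) N])) L"
    by (simp only: ren_subst_Var subst_beta[OF c])
  also have "\<dots> = subst (inst (Ms0 @ [N0])) L" by (simp add: Ms0 N0 ren_subst_Var_fun)
  finally have "ren f (subst (inst (Ms @ [N])) L) = subst (inst (Ms0 @ [N0])) L" .
  moreover have "red \<Delta> M (subst (inst (Ms @ [N])) L)" using beta Ms0 M by (auto intro: red.beta)
  ultimately show ?case by metis
next
  case (piL \<Delta> A A' B)
  then obtain a b where M: "M = Pi a b" "A = ren f a" "B = ren (liftr f) b" by (auto simp: ren_eq_Pi)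
  with piL obtain N where "red \<Delta> a N" "A' = ren f N" by blast
  with M show ?case by (auto intro: red.piL)
next
  case (piR \<Delta> B B' A)
  then obtain a b where M: "M = Pi a b" "A = ren f a" "B = ren (liftr f) b" by (auto simp: ren_eq_Pi)
  with piR obtain N where "red \<Delta> b N" "B' = ren (liftr f) N" by blast
  with M show ?case by (auto intro: red.piR)
next
  case (appL \<Delta> A A' B)
  then obtain a b where M: "M = App a b" "A = ren f a" "B = ren f b" by (auto simp: ren_eq_App)
  with appL obtain N where "red \<Delta> a N" "A' = ren f N" by blast
  with M show ?case by (auto intro: red.appL)
next
  case (appR \<Delta> B B' A)
  then obtain a b where M: "M = App a b" "A = ren f a" "B = ren f b" by (auto simp: ren_eq_App)
  with appR obtain N where "red \<Delta> b N" "B' = ren f N" by blast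
  with M show ?case by (auto intro: red.appR)
next
  case (lab k Ms0 \<Delta> M' l)
  then obtain Ms where M: "M = Lab l Ms" "Ms0 = map (ren f) Ms" by (auto simp: ren_eq_Lab)
  with lab have "Ms0 ! k = ren f (Ms ! k)" by simp
  with lab obtain N where "red \<Delta> (Ms ! k) N" "M' = ren f N" by metis
  with M lab show ?case by (auto intro!: exI[of _ "Lab l (Ms[k := N])"] red.lab simp: map_update)
qed

lemma reds_ren_reflect:
  "reds \<Delta> (ren f M) N' \<Longrightarrow> goodD \<Delta> \<Longrightarrow> \<exists>N. reds \<Delta> M N \<and> N' = ren f N"
proof (induction rule: reds_induct)
  case refl then show ?case by (intro exI[of _ M]) simp
next
  case (step y z)
  then obtain N where "reds \<Delta> M N" "y = ren f N" by auto
  moreover obtain P where "red \<Delta> N P" "z = ren f P" using red_ren_reflect[of \<Delta> y z f N] step calculation by metis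
  ultimately show ?case using reds_step by blast
qed

definition WN :: "lctx \<Rightarrow> trm \<Rightarrow> bool" where
  "WN \<Delta> M \<longleftrightarrow> (\<exists>v. reds \<Delta> M v \<and> irreducible \<Delta> v)"

lemma WN_ren_reflect: "WN \<Delta> (ren f M) \<Longrightarrow> goodD \<Delta> \<Longrightarrow> WN \<Delta> M"
  unfolding WN_def
proof (elim exE conjE)
  fix v assume r: "reds \<Delta> (ren f M) v" and i: "irreducible \<Delta> v" and g: "goodD \<Delta>"
  from reds_ren_reflect[OF r g] obtain N where N: "reds \<Delta> M N" "v = ren f N" by auto
  have "irreducible \<Delta> N"
  proof (rule ccontr)
    assume "\<not> irreducible \<Delta> N"
    then obtain P where "red \<Delta> N P" by (auto simp: irreducible_def)
    then have "red \<Delta> (ren f N) (ren f P)" using red_subst[OF _ g] by (simp add: ren_subst_Var)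
    with i N show False by (auto simp: irreducible_def)
  qed
  with N show "\<exists>v. reds \<Delta> M v \<and> irreducible \<Delta> v" by auto
qed




inductive par :: "lctx \<Rightarrow> trm \<Rightarrow> trm \<Rightarrow> bool" for \<Delta> where
  p_var: "par \<Delta> (Var i) (Var i)"
| p_U: "par \<Delta> (U i) (U i)"
| p_Pi: "par \<Delta> A A' \<Longrightarrow> par \<Delta> B B' \<Longrightarrow> par \<Delta> (Pi A B) (Pi A' B')"
| p_App: "par \<Delta> M M' \<Longrightarrow> par \<Delta> N N' \<Longrightarrow> par \<Delta> (App M N) (App M' N')"
| p_Lab: "list_all2 (par \<Delta>) Ms Ms' \<Longrightarrow> par \<Delta> (Lab l Ms) (Lab l Ms')"
| p_beta: "(l, As, A, L, B) \<in> set \<Delta> \<Longrightarrow> length Ms = length As \<Longrightarrow> list_all2 (par \<Delta>) Ms Ms' \<Longrightarrow>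
           par \<Delta> N N' \<Longrightarrow> par \<Delta> (App (Lab l Ms) N) (subst (inst (Ms' @ [N'])) L)"

lemma par_refl: "par \<Delta> M M"
proof (induction M)
  case (Lab l Ms)
  then have "list_all2 (par \<Delta>) Ms Ms" by (auto simp: list_all2_conv_all_nth)
  then show ?case by (metis par.p_Lab)
qed (auto intro: par.intros)

lemma par_Lab_inv: "par \<Delta> (Lab l Ms) X \<Longrightarrow> \<exists>Ms'. X = Lab l Ms' \<and> list_all2 (par \<Delta>) Ms Ms'"
  by (cases rule: par.cases) auto

lemma red_par: "red \<Delta> M N \<Longrightarrow> par \<Delta> M N"
proof (induction rule: red.induct)
  case (beta l As A L B \<Delta> Ms N)
  have "list_all2 (par \<Delta>) Ms Ms" by (simp add: list.rel_refl par_refl)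
  then show ?case using beta by (intro p_beta) (auto simp: par_refl)
next
  case (lab k Ms \<Delta> M' l)
  have "list_all2 (par \<Delta>) Ms (Ms[k := M'])"
    using lab by (auto simp: list_all2_conv_all_nth nth_list_update par_refl)
  then show ?case by (metis par.p_Lab)
qed (auto intro: par.intros par_refl)

lemma par_reds: "par \<Delta> M N \<Longrightarrow> reds \<Delta> M N"
proof (induction rule: par.induct)
  case (p_Pi A A' B B') then show ?case by (simp add: reds_Pi)
next
  case (p_App M M' N N') then show ?case by (simp add: reds_App)
next
  case (p_Lab Ms Ms' l)
  then have "list_all2 (reds \<Delta>) Ms Ms'" by (simp add: list_all2_conv_all_nth)
  then show ?case by (rule reds_Lab)
next
  case (p_beta l As A L B Ms Ms' N N')
  then have "list_all2 (reds \<Delta>) Ms Ms'" by (simp add: list_all2_conv_all_nth)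
  then have "reds \<Delta> (App (Lab l Ms) N) (App (Lab l Ms') N')" using p_beta by (simp add: reds_App reds_Lab)
  moreover have "red \<Delta> (App (Lab l Ms') N') (subst (inst (Ms' @ [N'])) L)"
    using p_beta by (intro red.beta[of l As A L B]) (auto dest: list_all2_lengthD)
  ultimately show ?case by (rule reds_step)
qed simp_all


lemma par_ren: "par \<Delta> M M' \<Longrightarrow> goodD \<Delta> \<Longrightarrow> par \<Delta> (ren f M) (ren f M')"
proof (induction arbitrary: f rule: par.induct)
  case (p_Lab Ms Ms' l)
  then have "list_all2 (par \<Delta>) (map (ren f) Ms) (map (ren f) Ms')"
    by (auto simp: list_all2_conv_all_nth)
  then have "par \<Delta> (Lab l (map (ren f) Ms)) (Lab l (map (ren f) Ms'))" by (metis par.p_Lab)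
  then show ?case by simp
next
  case (p_beta l As A L B Ms Ms' N N')
  then have c: "closedn (Suc (length Ms')) L" by (auto simp: goodD_def dest!: list_all2_lengthD)
  have "list_all2 (par \<Delta>) (map (ren f) Ms) (map (ren f) Ms')"
    using p_beta by (auto simp: list_all2_conv_all_nth)
  then have "par \<Delta> (App (Lab l (map (ren f) Ms)) (ren f N)) (subst (inst (map (ren f) Ms' @ [ren f N'])) L)"
    using p_beta by (intro par.p_beta[of l As A L B]) auto
  moreover have "ren f (subst (inst (Ms' @ [N'])) L) = subst (inst (map (ren f) Ms' @ [ren f N'])) L"
    by (simp only: ren_subst_Var_fun subst_beta[OF c])
  ultimately show ?case by simp
qed (auto intro: par.intros)

lemma par_subst: "par \<Delta> M M' \<Longrightarrow> goodD \<Delta> \<Longrightarrow> (\<forall>j. par \<Delta> (\<sigma> j) (\<sigma>' j)) \<Longrightarrow> par \<Delta> (subst \<sigma> M) (subst \<sigma>' M')"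
proof (induction arbitrary: \<sigma> \<sigma>' rule: par.induct)
  case (p_var i) then show ?case by simp
next
  case (p_Pi A A' B B')
  have "\<forall>j. par \<Delta> (up \<sigma> j) (up \<sigma>' j)"
    using p_Pi.prems by (auto simp: up_def lift_def par_ren intro: par.intros split: nat.splits)
  then show ?case using p_Pi by (auto intro: par.intros)
next
  case (p_App M M' N N') then show ?case by (auto intro: par.intros)
next
  case (p_Lab Ms Ms' l)
  then have "list_all2 (par \<Delta>) (map (subst \<sigma>) Ms) (map (subst \<sigma>') Ms')"
    by (auto simp: list_all2_conv_all_nth)
  then have "par \<Delta> (Lab l (map (subst \<sigma>) Ms)) (Lab l (map (subst \<sigma>') Ms'))" by (metis par.p_Lab)
  then show ?case by simp
next
  case (p_beta l As A L B Ms Ms' N N')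
  then have c: "closedn (Suc (length Ms')) L" by (auto simp: goodD_def dest!: list_all2_lengthD)
  have "list_all2 (par \<Delta>) (map (subst \<sigma>) Ms) (map (subst \<sigma>') Ms')"
    using p_beta by (auto simp: list_all2_conv_all_nth)
  then have "par \<Delta> (App (Lab l (map (subst \<sigma>) Ms)) (subst \<sigma> N)) (subst (inst (map (subst \<sigma>') Ms' @ [subst \<sigma>' N'])) L)"
    using p_beta by (intro par.p_beta[of l As A L B]) auto
  moreover have "subst \<sigma>' (subst (inst (Ms' @ [N'])) L) = subst (inst (map (subst \<sigma>') Ms' @ [subst \<sigma>' N'])) L"
    by (simp only: subst_beta[OF c])
  ultimately show ?case by simp
qed (auto intro: par.intros)

fun dev :: "lctx \<Rightarrow> trm \<Rightarrow> trm" where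
  "dev \<Delta> (Var i) = Var i"
| "dev \<Delta> (U i) = U i"
| "dev \<Delta> (Pi A B) = Pi (dev \<Delta> A) (dev \<Delta> B)"
| "dev \<Delta> (App (Lab l Ms) N) = (case map_of \<Delta> l of
     Some (As, A, L, B) \<Rightarrow> if length Ms = length As then subst (inst (map (dev \<Delta>) Ms @ [dev \<Delta> N])) L
                            else App (Lab l (map (dev \<Delta>) Ms)) (dev \<Delta> N)
   | None \<Rightarrow> App (Lab l (map (dev \<Delta>) Ms)) (dev \<Delta> N))"
| "dev \<Delta> (App M N) = App (dev \<Delta> M) (dev \<Delta> N)"
| "dev \<Delta> (Lab l Ms) = Lab l (map (dev \<Delta>) Ms)"

lemma dev_App_nonlab: "(\<And>l Ms. M \<noteq> Lab l Ms) \<Longrightarrow> dev \<Delta> (App M N) = App (dev \<Delta> M) (dev \<Delta> N)"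
  by (cases M) auto

lemma inst_par: "list_all2 (par \<Delta>) xs ys \<Longrightarrow> par \<Delta> (inst xs j) (inst ys j)"
proof -
  assume a: "list_all2 (par \<Delta>) xs ys"
  then have l: "length xs = length ys" by (rule list_all2_lengthD)
  have r: "list_all2 (par \<Delta>) (rev xs) (rev ys)" using a by (simp add: list_all2_rev)
  show ?thesis
  proof (cases "j < length xs")
    case True then show ?thesis using l r by (simp add: inst_def list_all2_nthD2)
  next
    case False then show ?thesis using l by (simp add: inst_def par_refl)
  qed
qed

lemma par_dev: "par \<Delta> M N \<Longrightarrow> goodD \<Delta> \<Longrightarrow> par \<Delta> N (dev \<Delta> M)"
proof (induction rule: par.induct)
  case (p_var i) then show ?case by (simp add: par_refl)
next
  case (p_U i) then show ?case by (simp add: par_refl)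
next
  case (p_Pi A A' B B') then show ?case by (simp add: par.p_Pi)
next
  case (p_Lab Ms Ms' l)
  then have "list_all2 (par \<Delta>) Ms' (map (dev \<Delta>) Ms)" by (auto simp: list_all2_conv_all_nth)
  then show ?case by (simp add: par.p_Lab)
next
  case (p_App M M' N N')
  show ?case
  proof (cases "\<exists>l Ms. M = Lab l Ms")
    case False
    then show ?thesis using p_App by (simp add: dev_App_nonlab par.p_App)
  next
    case True
    then obtain l Ms where M: "M = Lab l Ms" by blast
    with p_App obtain Ms' where M': "M' = Lab l Ms'" using par_Lab_inv by blast
    have ih: "par \<Delta> (Lab l Ms') (Lab l (map (dev \<Delta>) Ms))" using p_App M M' by simp
    then obtain Ms'' where "Lab l (map (dev \<Delta>) Ms) = Lab l Ms''" "list_all2 (par \<Delta>) Ms' Ms''"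
      using par_Lab_inv by blast
    then have la: "list_all2 (par \<Delta>) Ms' (map (dev \<Delta>) Ms)" by simp
    have nN: "par \<Delta> N' (dev \<Delta> N)" using p_App by simp
    have dflt: "par \<Delta> (App M' N') (App (Lab l (map (dev \<Delta>) Ms)) (dev \<Delta> N))"
      using ih nN M' by (simp add: par.p_App)
    show ?thesis
    proof (cases "map_of \<Delta> l")
      case None then show ?thesis using dflt M by simp
    next
      case (Some e)
      then obtain As A L B where e: "map_of \<Delta> l = Some (As, A, L, B)" by (cases e) auto
      show ?thesis
      proof (cases "length Ms = length As")
        case False then show ?thesis using dflt M e by simp
      next
        case True
        have mem: "(l, As, A, L, B) \<in> set \<Delta>" using e by (rule map_of_SomeD)
        have "length Ms' = length As" using True la by (simp add: list_all2_lengthD)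
        then have "par \<Delta> (App (Lab l Ms') N') (subst (inst (map (dev \<Delta>) Ms @ [dev \<Delta> N])) L)"
          using mem la nN by (intro par.p_beta[of l As A L B]) auto
        then show ?thesis using M M' e True by simp
      qed
    qed
  qed
next
  case (p_beta l As A L B Ms Ms' N N')
  have e: "map_of \<Delta> l = Some (As, A, L, B)"
    using p_beta by (intro map_of_is_SomeI) (auto simp: goodD_def)
  have la: "list_all2 (par \<Delta>) (Ms' @ [N']) (map (dev \<Delta>) Ms @ [dev \<Delta> N])"
    using p_beta by (auto simp: list_all2_conv_all_nth nth_append)
  have "par \<Delta> (subst (inst (Ms' @ [N'])) L) (subst (inst (map (dev \<Delta>) Ms @ [dev \<Delta> N])) L)"
    using p_beta.prems by (intro par_subst par_refl) (auto intro: inst_par[OF la])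
  then show ?case using e p_beta by simp
qed

lemma par_diamond: "par \<Delta> M N1 \<Longrightarrow> par \<Delta> M N2 \<Longrightarrow> goodD \<Delta> \<Longrightarrow> \<exists>P. par \<Delta> N1 P \<and> par \<Delta> N2 P"
  using par_dev by blast

lemma par_strip: "(par \<Delta>)\<^sup>*\<^sup>* M N1 \<Longrightarrow> par \<Delta> M N2 \<Longrightarrow> goodD \<Delta> \<Longrightarrow> \<exists>P. par \<Delta> N1 P \<and> (par \<Delta>)\<^sup>*\<^sup>* N2 P"
proof (induction arbitrary: N2 rule: rtranclp_induct)
  case base then show ?case by auto
next
  case (step y z)
  then obtain P where P: "par \<Delta> y P" "(par \<Delta>)\<^sup>*\<^sup>* N2 P" by blast
  obtain Q where "par \<Delta> z Q" "par \<Delta> P Q" using par_diamond[OF step(2) P(1) step(5)] by blast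
  with P show ?case by (meson rtranclp.rtrancl_into_rtrancl)
qed

lemma par_confl:
  assumes a: "(par \<Delta>)\<^sup>*\<^sup>* M N1" and b: "(par \<Delta>)\<^sup>*\<^sup>* M N2" and g: "goodD \<Delta>"
  shows "\<exists>P. (par \<Delta>)\<^sup>*\<^sup>* N1 P \<and> (par \<Delta>)\<^sup>*\<^sup>* N2 P"
  using b a
proof (induction arbitrary: N1 rule: rtranclp_induct)
  case base then show ?case by auto
next
  case (step y z)
  then obtain P where P: "(par \<Delta>)\<^sup>*\<^sup>* N1 P" "(par \<Delta>)\<^sup>*\<^sup>* y P" by blast
  obtain Q where "par \<Delta> P Q" "(par \<Delta>)\<^sup>*\<^sup>* z Q" using par_strip[OF P(2) step(2) g] by blast
  with P show ?case by (meson rtranclp.rtrancl_into_rtrancl)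
qed

lemma reds_par_eq: "reds \<Delta> = (par \<Delta>)\<^sup>*\<^sup>*"
proof (intro ext iffI)
  fix M N assume "reds \<Delta> M N" then show "(par \<Delta>)\<^sup>*\<^sup>* M N"
    by (induction rule: reds_induct) (auto intro: red_par rtranclp.rtrancl_into_rtrancl)
next
  fix M N assume "(par \<Delta>)\<^sup>*\<^sup>* M N" then show "reds \<Delta> M N"
    by (induction rule: rtranclp_induct) (auto intro: par_reds reds_trans)
qed

lemma confluence: "reds \<Delta> M N1 \<Longrightarrow> reds \<Delta> M N2 \<Longrightarrow> goodD \<Delta> \<Longrightarrow> \<exists>P. reds \<Delta> N1 P \<and> reds \<Delta> N2 P"
  unfolding reds_par_eq by (rule par_confl)




fun ne :: "trm \<Rightarrow> bool" where
  "ne (Var i) = True"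
| "ne (App M N) = ne M"
| "ne _ = False"

definition WNG :: "lctx \<Rightarrow> trm \<Rightarrow> bool" where
  "WNG \<Delta> M \<longleftrightarrow> (\<exists>v. reds \<Delta> M v \<and> irreducible \<Delta> v \<and> (is_value v \<or> ne v))"

definition NE :: "lctx \<Rightarrow> trm \<Rightarrow> bool" where
  "NE \<Delta> M \<longleftrightarrow> (\<exists>n. reds \<Delta> M n \<and> irreducible \<Delta> n \<and> ne n)"

definition joinable :: "lctx \<Rightarrow> trm \<Rightarrow> trm \<Rightarrow> bool" where
  "joinable \<Delta> A B \<longleftrightarrow> (\<exists>C. reds \<Delta> A C \<and> reds \<Delta> B C)"

lemma U_irr: "irreducible \<Delta> (U i)"
  by (auto simp: irreducible_def elim: red.cases)

lemma irr_reds: "reds \<Delta> v X \<Longrightarrow> irreducible \<Delta> v \<Longrightarrow> X = v"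
  by (induction rule: reds_induct) (auto simp: irreducible_def)

lemma reds_U: "reds \<Delta> (U i) X \<Longrightarrow> X = U i"
  using irr_reds U_irr by blast

lemma reds_Pi_inv: "reds \<Delta> (Pi A B) X \<Longrightarrow> \<exists>A' B'. X = Pi A' B' \<and> reds \<Delta> A A' \<and> reds \<Delta> B B'"
proof (induction rule: reds_induct)
  case refl then show ?case by auto
next
  case (step y z)
  then obtain A' B' where y: "y = Pi A' B'" "reds \<Delta> A A'" "reds \<Delta> B B'" by auto
  from step(2) y(1) show ?case
  proof (cases rule: red.cases)
    case (piL A'') then show ?thesis using y by (auto intro: reds_step)
  next
    case (piR B'') then show ?thesis using y by (auto intro: reds_step)
  qed auto
qed

lemma reds_Lab_inv: "reds \<Delta> (Lab l Ms) X \<Longrightarrow> \<exists>Ms'. X = Lab l Ms'"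
proof (induction rule: reds_induct)
  case refl then show ?case by auto
next
  case (step y z)
  then obtain Ms' where "y = Lab l Ms'" by auto
  with step(2) show ?case by (cases rule: red.cases) auto
qed

lemma red_ne: "red \<Delta> M N \<Longrightarrow> ne M \<Longrightarrow> ne N"
  by (induction rule: red.induct) auto

lemma reds_ne: "reds \<Delta> M N \<Longrightarrow> ne M \<Longrightarrow> ne N"
  by (induction rule: reds_induct) (auto dest: red_ne)

lemma joinable_sym: "joinable \<Delta> A B \<Longrightarrow> joinable \<Delta> B A"
  by (auto simp: joinable_def)

lemma joinable_trans: "joinable \<Delta> A B \<Longrightarrow> joinable \<Delta> B C \<Longrightarrow> goodD \<Delta> \<Longrightarrow> joinable \<Delta> A C"
proof -
  assume "joinable \<Delta> A B" "joinable \<Delta> B C" "goodD \<Delta>"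
  then obtain X Y where "reds \<Delta> A X" "reds \<Delta> B X" "reds \<Delta> B Y" "reds \<Delta> C Y" by (auto simp: joinable_def)
  moreover obtain Z where "reds \<Delta> X Z" "reds \<Delta> Y Z" using confluence calculation \<open>goodD \<Delta>\<close> by blast
  ultimately show ?thesis by (auto simp: joinable_def intro: reds_trans)
qed

lemma reds_joinable: "reds \<Delta> A B \<Longrightarrow> joinable \<Delta> A B"
  by (auto simp: joinable_def)

lemma joinable_irr: "joinable \<Delta> X N \<Longrightarrow> irreducible \<Delta> N \<Longrightarrow> reds \<Delta> X N"
  by (auto simp: joinable_def dest: irr_reds)

lemma joinable_U_U: "joinable \<Delta> (U i) (U j) \<Longrightarrow> i = j"
  by (auto simp: joinable_def dest!: reds_U)

lemma joinable_U_Pi: "joinable \<Delta> (U i) (Pi A B) \<Longrightarrow> False"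
  by (auto simp: joinable_def dest!: reds_U reds_Pi_inv)

lemma joinable_U_Lab: "joinable \<Delta> (U i) (Lab l Ms) \<Longrightarrow> False"
  by (auto simp: joinable_def dest!: reds_U reds_Lab_inv)

lemma joinable_Pi_Lab: "joinable \<Delta> (Pi A B) (Lab l Ms) \<Longrightarrow> False"
  by (auto simp: joinable_def dest!: reds_Pi_inv reds_Lab_inv)

lemma joinable_Pi_Pi: "joinable \<Delta> (Pi A B) (Pi A' B') \<Longrightarrow> joinable \<Delta> A A' \<and> joinable \<Delta> B B'"
  by (auto simp: joinable_def dest!: reds_Pi_inv)

lemma joinable_subst: "joinable \<Delta> A B \<Longrightarrow> goodD \<Delta> \<Longrightarrow> joinable \<Delta> (subst \<sigma> A) (subst \<sigma> B)"
  by (auto simp: joinable_def intro: reds_subst)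

lemma WNG_fwd: "WNG \<Delta> M \<Longrightarrow> reds \<Delta> M M' \<Longrightarrow> goodD \<Delta> \<Longrightarrow> WNG \<Delta> M'"
proof -
  assume a: "WNG \<Delta> M" "reds \<Delta> M M'" "goodD \<Delta>"
  then obtain v where v: "reds \<Delta> M v" "irreducible \<Delta> v" "is_value v \<or> ne v" by (auto simp: WNG_def)
  obtain P where "reds \<Delta> v P" "reds \<Delta> M' P" using confluence[OF v(1) a(2) a(3)] by blast
  with v show ?thesis by (auto simp: WNG_def dest: irr_reds)
qed

lemma WN_fwd: "WN \<Delta> M \<Longrightarrow> reds \<Delta> M M' \<Longrightarrow> goodD \<Delta> \<Longrightarrow> WN \<Delta> M'"
proof -
  assume a: "WN \<Delta> M" "reds \<Delta> M M'" "goodD \<Delta>"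
  then obtain v where v: "reds \<Delta> M v" "irreducible \<Delta> v" by (auto simp: WN_def)
  obtain P where "reds \<Delta> v P" "reds \<Delta> M' P" using confluence[OF v(1) a(2) a(3)] by blast
  with v show ?thesis by (auto simp: WN_def dest: irr_reds)
qed

lemma WNG_back: "WNG \<Delta> M' \<Longrightarrow> reds \<Delta> M M' \<Longrightarrow> WNG \<Delta> M"
  by (auto simp: WNG_def intro: reds_trans)

lemma NE_fwd: "NE \<Delta> M \<Longrightarrow> reds \<Delta> M M' \<Longrightarrow> goodD \<Delta> \<Longrightarrow> NE \<Delta> M'"
proof -
  assume a: "NE \<Delta> M" "reds \<Delta> M M'" "goodD \<Delta>"
  then obtain v where v: "reds \<Delta> M v" "irreducible \<Delta> v" "ne v" by (auto simp: NE_def)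
  obtain P where "reds \<Delta> v P" "reds \<Delta> M' P" using confluence[OF v(1) a(2) a(3)] by blast
  with v show ?thesis by (auto simp: NE_def dest: irr_reds)
qed

lemma NE_WNG: "NE \<Delta> M \<Longrightarrow> WNG \<Delta> M"
  by (auto simp: NE_def WNG_def)

lemma WNG_WN: "WNG \<Delta> M \<Longrightarrow> WN \<Delta> M"
  by (auto simp: WNG_def WN_def)

lemma irr_App_ne: "ne n \<Longrightarrow> irreducible \<Delta> n \<Longrightarrow> irreducible \<Delta> v \<Longrightarrow> irreducible \<Delta> (App n v)"
  unfolding irreducible_def
proof
  assume a: "ne n" "\<not> (\<exists>N. red \<Delta> n N)" "\<not> (\<exists>N. red \<Delta> v N)"
  assume "\<exists>N. red \<Delta> (App n v) N"
  then obtain N where "red \<Delta> (App n v) N" by blast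
  then show False using a by (cases rule: red.cases) auto
qed

lemma NE_App: "NE \<Delta> M \<Longrightarrow> WN \<Delta> a \<Longrightarrow> NE \<Delta> (App M a)"
proof -
  assume "NE \<Delta> M" "WN \<Delta> a"
  then obtain n v where "reds \<Delta> M n" "irreducible \<Delta> n" "ne n" "reds \<Delta> a v" "irreducible \<Delta> v"
    by (auto simp: NE_def WN_def)
  then show ?thesis unfolding NE_def
    by (intro exI[of _ "App n v"]) (auto simp: reds_App irr_App_ne)
qed

lemma NE_Var: "NE \<Delta> (Var i)"
proof -
  have "irreducible \<Delta> (Var i)" by (auto simp: irreducible_def elim: red.cases)
  then show ?thesis unfolding NE_def by (intro exI[of _ "Var i"]) simp
qed

lemma irr_Pi: "irreducible \<Delta> A \<Longrightarrow> irreducible \<Delta> B \<Longrightarrow> irreducible \<Delta> (Pi A B)"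
  unfolding irreducible_def
proof
  assume a: "\<not> (\<exists>N. red \<Delta> A N)" "\<not> (\<exists>N. red \<Delta> B N)"
  assume "\<exists>N. red \<Delta> (Pi A B) N"
  then obtain N where "red \<Delta> (Pi A B) N" by blast
  then show False using a by (cases rule: red.cases) auto
qed

lemma irr_Lab: "(\<forall>x\<in>set Ms. irreducible \<Delta> x) \<Longrightarrow> irreducible \<Delta> (Lab l Ms)"
  unfolding irreducible_def
proof
  assume a: "\<forall>x\<in>set Ms. \<not> (\<exists>N. red \<Delta> x N)"
  assume "\<exists>N. red \<Delta> (Lab l Ms) N"
  then obtain N where "red \<Delta> (Lab l Ms) N" by blast
  then show False using a by (cases rule: red.cases) (auto simp: nth_mem)
qed

lemma WNG_Pi: "WNG \<Delta> A \<Longrightarrow> WN \<Delta> B \<Longrightarrow> WNG \<Delta> (Pi A B)"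
proof -
  assume "WNG \<Delta> A" "WN \<Delta> B"
  then obtain a b where "reds \<Delta> A a" "irreducible \<Delta> a" "reds \<Delta> B b" "irreducible \<Delta> b"
    by (auto simp: WNG_def WN_def)
  then show ?thesis unfolding WNG_def
    by (intro exI[of _ "Pi a b"]) (auto simp: reds_Pi irr_Pi is_value_def)
qed

lemma list_choice: "(\<forall>x\<in>set xs. \<exists>y. P x y) \<Longrightarrow> \<exists>ys. list_all2 P xs ys"
  by (induction xs) auto

lemma WNG_Lab: "(\<forall>x\<in>set Ms. WN \<Delta> x) \<Longrightarrow> WNG \<Delta> (Lab l Ms)"
proof -
  assume "\<forall>x\<in>set Ms. WN \<Delta> x"
  then obtain vs where vs: "list_all2 (\<lambda>x v. reds \<Delta> x v \<and> irreducible \<Delta> v) Ms vs"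
    using list_choice[of Ms "\<lambda>x v. reds \<Delta> x v \<and> irreducible \<Delta> v"] by (auto simp: WN_def)
  then have "list_all2 (reds \<Delta>) Ms vs" by (auto simp: list_all2_conv_all_nth)
  then have "reds \<Delta> (Lab l Ms) (Lab l vs)" by (rule reds_Lab)
  moreover have "irreducible \<Delta> (Lab l vs)" using vs
    by (intro irr_Lab) (auto simp: list_all2_conv_all_nth in_set_conv_nth)
  ultimately show ?thesis by (auto simp: WNG_def is_value_def)
qed




inductive TyR :: "lctx \<Rightarrow> (nat \<Rightarrow> trm \<Rightarrow> trm set \<Rightarrow> bool) \<Rightarrow> nat \<Rightarrow> trm \<Rightarrow> trm set \<Rightarrow> bool"
  for \<Delta> R i where
  tU: "reds \<Delta> T (U j) \<Longrightarrow> j < i \<Longrightarrow> TyR \<Delta> R i T {X. \<exists>S. R j X S}"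
| tPi: "reds \<Delta> T (Pi A B) \<Longrightarrow> TyR \<Delta> R i A SA \<Longrightarrow> (\<forall>a\<in>SA. TyR \<Delta> R i (subst (inst [a]) B) (F a)) \<Longrightarrow>
        WN \<Delta> B \<Longrightarrow> TyR \<Delta> R i T {f. WNG \<Delta> f \<and> (\<forall>a\<in>SA. App f a \<in> F a)}"
| tNe: "reds \<Delta> T N \<Longrightarrow> ne N \<Longrightarrow> irreducible \<Delta> N \<Longrightarrow> TyR \<Delta> R i T {M. WNG \<Delta> M}"

primrec TyUp :: "lctx \<Rightarrow> nat \<Rightarrow> nat \<Rightarrow> trm \<Rightarrow> trm set \<Rightarrow> bool" where
  "TyUp \<Delta> 0 = (\<lambda>j T S. False)"
| "TyUp \<Delta> (Suc n) = (\<lambda>j T S. if j < n then TyUp \<Delta> n j T S else if j = n then TyR \<Delta> (TyUp \<Delta> n) n T S else False)"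

definition Ty :: "lctx \<Rightarrow> nat \<Rightarrow> trm \<Rightarrow> trm set \<Rightarrow> bool" where
  "Ty \<Delta> i = TyR \<Delta> (TyUp \<Delta> i) i"

lemma TyUp_eq: "j < n \<Longrightarrow> TyUp \<Delta> n j = Ty \<Delta> j"
proof (induction n)
  case 0 then show ?case by simp
next
  case (Suc n)
  show ?case
  proof (cases "j < n")
    case True then show ?thesis using Suc by (auto simp: fun_eq_iff)
  next
    case False then have "j = n" using Suc by simp
    then show ?thesis by (auto simp: fun_eq_iff Ty_def)
  qed
qed

lemma TyR_back: "TyR \<Delta> R i T' S \<Longrightarrow> reds \<Delta> T T' \<Longrightarrow> TyR \<Delta> R i T S"
  by (cases rule: TyR.cases) (auto intro: TyR.intros reds_trans)

lemma TyR_fwd: "TyR \<Delta> R i T S \<Longrightarrow> reds \<Delta> T T' \<Longrightarrow> goodD \<Delta> \<Longrightarrow> TyR \<Delta> R i T' S"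
proof (induction arbitrary: T' rule: TyR.induct)
  case (tU T j)
  obtain P where "reds \<Delta> (U j) P" "reds \<Delta> T' P" using confluence tU by blast
  then have "reds \<Delta> T' (U j)" by (auto dest: reds_U)
  then show ?case using tU by (auto intro: TyR.tU)
next
  case (tPi T A B SA F)
  obtain P where P: "reds \<Delta> (Pi A B) P" "reds \<Delta> T' P" using confluence tPi by blast
  then obtain A2 B2 where e: "P = Pi A2 B2" "reds \<Delta> A A2" "reds \<Delta> B B2" by (auto dest: reds_Pi_inv)
  have "TyR \<Delta> R i A2 SA" using tPi e by simp
  moreover have "\<forall>a\<in>SA. TyR \<Delta> R i (subst (inst [a]) B2) (F a)"
    using tPi e by (auto intro: reds_subst)
  moreover have "WN \<Delta> B2" using tPi e by (auto intro: WN_fwd)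
  ultimately show ?case using P e by (auto intro: TyR.tPi)
next
  case (tNe T N)
  obtain P where "reds \<Delta> N P" "reds \<Delta> T' P" using confluence tNe by blast
  then have "reds \<Delta> T' N" using tNe by (auto dest: irr_reds)
  then show ?case using tNe by (auto intro: TyR.tNe)
qed

lemma TyR_no_Lab: assumes "TyR \<Delta> R i T S" "reds \<Delta> T (Lab l Ns)" "goodD \<Delta>" shows False
  using assms(1)
proof (cases rule: TyR.cases)
  case (tU j)
  then show False using assms joinable_U_Lab joinable_trans[of \<Delta> "U j" T "Lab l Ns"]
    by (meson joinable_sym reds_joinable)
next
  case (tPi A B SA F)
  then show False using assms joinable_Pi_Lab joinable_trans[of \<Delta> "Pi A B" T "Lab l Ns"]
    by (meson joinable_sym reds_joinable)
next
  case (tNe N)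
  then have "joinable \<Delta> (Lab l Ns) N" using assms joinable_trans[of \<Delta> "Lab l Ns" T N]
    by (meson joinable_sym reds_joinable)
  then have "reds \<Delta> (Lab l Ns) N" using tNe by (simp add: joinable_irr)
  then show False using tNe by (auto dest!: reds_Lab_inv)
qed

lemma TyR_WNG: "TyR \<Delta> R i T S \<Longrightarrow> WNG \<Delta> T"
proof (induction rule: TyR.induct)
  case (tU T j)
  then show ?case using U_irr by (auto simp: WNG_def is_value_def)
next
  case (tPi T A B SA F)
  then show ?case by (meson WNG_Pi WNG_back)
next
  case (tNe T N)
  then show ?case by (auto simp: WNG_def)
qed

lemma TyR_mono: "TyR \<Delta> R i T S \<Longrightarrow> (\<And>j. j < i \<Longrightarrow> R j = R' j) \<Longrightarrow> i \<le> i' \<Longrightarrow> TyR \<Delta> R' i' T S"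
proof (induction rule: TyR.induct)
  case (tU T j)
  then have "{X. \<exists>S. R j X S} = {X. \<exists>S. R' j X S}" by simp
  then show ?case using tU TyR.tU[of \<Delta> T j i' R'] by simp
qed (auto intro: TyR.intros)

lemma Ty_cum: "Ty \<Delta> i T S \<Longrightarrow> i \<le> i' \<Longrightarrow> Ty \<Delta> i' T S"
  unfolding Ty_def by (rule TyR_mono[of \<Delta> "TyUp \<Delta> i" i T S "TyUp \<Delta> i'" i']) (auto simp: TyUp_eq)

lemma Ty_U: "reds \<Delta> T (U j) \<Longrightarrow> j < i \<Longrightarrow> Ty \<Delta> i T {X. \<exists>S. Ty \<Delta> j X S}"
  unfolding Ty_def using TyR.tU[of \<Delta> T j i "TyUp \<Delta> i"] by (simp add: TyUp_eq Ty_def)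

lemma Ty_U_inv: assumes "Ty \<Delta> k (U i) S" shows "S = {X. \<exists>S. Ty \<Delta> i X S}"
proof -
  have "TyR \<Delta> (TyUp \<Delta> k) k (U i) S" using assms by (simp add: Ty_def)
  then show ?thesis
proof (cases rule: TyR.cases)
  case (tU j)
  then show ?thesis by (auto dest!: reds_U simp: TyUp_eq)
next
  case (tPi A B SA F) then show ?thesis by (auto dest!: reds_U)
next
  case (tNe N) then show ?thesis by (auto dest!: reds_U)
qed
qed

lemma TyR_Pi_inv: assumes "TyR \<Delta> R i (Pi A0 B0) S" shows "\<exists>A1 B1 SA F. reds \<Delta> (Pi A0 B0) (Pi A1 B1) \<and> TyR \<Delta> R i A1 SA \<and>
   (\<forall>a\<in>SA. TyR \<Delta> R i (subst (inst [a]) B1) (F a)) \<and> WN \<Delta> B1 \<and> S = {f. WNG \<Delta> f \<and> (\<forall>a\<in>SA. App f a \<in> F a)}"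
  using assms
proof (cases rule: TyR.cases)
  case (tU j) then show ?thesis by (auto dest!: reds_Pi_inv)
next
  case (tPi A B SA F) then show ?thesis by blast
next
  case (tNe N) then show ?thesis by (auto dest!: reds_Pi_inv)
qed

lemma TyR_det: "TyR \<Delta> R i T S \<Longrightarrow> TyR \<Delta> R' i' T' S' \<Longrightarrow> joinable \<Delta> T T' \<Longrightarrow> goodD \<Delta> \<Longrightarrow>
   (\<And>j. j < i \<Longrightarrow> j < i' \<Longrightarrow> R j = R' j) \<Longrightarrow> S = S'"
proof (induction arbitrary: T' S' rule: TyR.induct)
  case (tU T j)
  from tU.prems(1) show ?case
  proof (cases rule: TyR.cases)
    case (tU j')
    have "joinable \<Delta> (U j) (U j')" using tU.hyps(1) tU.prems(2,3) \<open>reds \<Delta> T' (U j')\<close>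
      by (meson joinable_sym joinable_trans reds_joinable)
    then have "j = j'" by (rule joinable_U_U)
    then show ?thesis using tU tU.prems(4) tU.hyps by auto
  next
    case (tPi A B SA F)
    have "joinable \<Delta> (U j) (Pi A B)" using tU.hyps(1) tU.prems(2,3) tPi(2)
      by (meson joinable_sym joinable_trans reds_joinable)
    then show ?thesis by (auto dest: joinable_U_Pi)
  next
    case (tNe N)
    have "joinable \<Delta> (U j) N" using tU.hyps(1) tU.prems(2,3) tNe(2)
      by (meson joinable_sym joinable_trans reds_joinable)
    then have "reds \<Delta> (U j) N" using tNe by (simp add: joinable_irr)
    then show ?thesis using tNe by (auto dest!: reds_U)
  qed
next
  case (tPi T A B SA F)
  note H = tPi.hyps and IH = tPi.IH and P = tPi.prems
  from tPi.prems(1) show ?case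
  proof (cases rule: TyR.cases)
    case (tU j')
    have "joinable \<Delta> (U j') (Pi A B)" using H(1) P(2,3) tU(2)
      by (meson joinable_sym joinable_trans reds_joinable)
    then show ?thesis by (auto dest: joinable_U_Pi)
  next
    case (tPi A' B' SA' F')
    have "joinable \<Delta> (Pi A B) (Pi A' B')" using H(1) P(2,3) tPi(2)
      by (meson joinable_sym joinable_trans reds_joinable)
    then have jA: "joinable \<Delta> A A'" and jB: "joinable \<Delta> B B'" by (auto dest: joinable_Pi_Pi)
    have IHA: "TyR \<Delta> R' i' A' SA' \<Longrightarrow> joinable \<Delta> A A' \<Longrightarrow> SA = SA'" using IH(1) P(3,4) by blast
    have SA: "SA = SA'" using IHA tPi(3) jA by blast
    have "\<forall>a\<in>SA. F a = F' a"
    proof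
      fix a assume a: "a \<in> SA"
      have "joinable \<Delta> (subst (inst [a]) B) (subst (inst [a]) B')" using jB P(3) by (rule joinable_subst)
      moreover have "TyR \<Delta> R' i' (subst (inst [a]) B') (F' a)" using tPi(4) a SA by auto
      ultimately show "F a = F' a" using IH(2) a P(3,4) by blast
    qed
    then show ?thesis using tPi SA by auto
  next
    case (tNe N)
    have "joinable \<Delta> (Pi A B) N" using H(1) P(2,3) tNe(2)
      by (meson joinable_sym joinable_trans reds_joinable)
    then have "reds \<Delta> (Pi A B) N" using tNe by (simp add: joinable_irr)
    then show ?thesis using tNe by (auto dest!: reds_Pi_inv)
  qed
next
  case (tNe T N)
  from tNe.prems(1) show ?case
  proof (cases rule: TyR.cases)
    case (tU j')
    have "joinable \<Delta> (U j') N" using tNe.hyps(1) tNe.prems(2,3) tU(2)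
      by (meson joinable_sym joinable_trans reds_joinable)
    then have "reds \<Delta> (U j') N" using tNe by (simp add: joinable_irr)
    then show ?thesis using tNe by (auto dest!: reds_U)
  next
    case (tPi A B SA F)
    have "joinable \<Delta> (Pi A B) N" using tNe.hyps(1) tNe.prems(2,3) tPi(2)
      by (meson joinable_sym joinable_trans reds_joinable)
    then have "reds \<Delta> (Pi A B) N" using tNe by (simp add: joinable_irr)
    then show ?thesis using tNe by (auto dest!: reds_Pi_inv)
  next
    case (tNe N') then show ?thesis by simp
  qed
qed

lemma Ty_det: "Ty \<Delta> i T S \<Longrightarrow> Ty \<Delta> i' T' S' \<Longrightarrow> joinable \<Delta> T T' \<Longrightarrow> goodD \<Delta> \<Longrightarrow> S = S'"
  unfolding Ty_def by (erule TyR_det[of \<Delta> "TyUp \<Delta> i" i T S "TyUp \<Delta> i'" i']) (auto simp: TyUp_eq)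

lemma Ty_back: "Ty \<Delta> i T' S \<Longrightarrow> reds \<Delta> T T' \<Longrightarrow> Ty \<Delta> i T S"
  unfolding Ty_def by (rule TyR_back)

lemma Ty_fwd: "Ty \<Delta> i T S \<Longrightarrow> reds \<Delta> T T' \<Longrightarrow> goodD \<Delta> \<Longrightarrow> Ty \<Delta> i T' S"
  unfolding Ty_def by (rule TyR_fwd)

lemma Ty_WNG: "Ty \<Delta> i T S \<Longrightarrow> WNG \<Delta> T"
  unfolding Ty_def by (rule TyR_WNG)

lemma Ty_no_Lab: "Ty \<Delta> i T S \<Longrightarrow> reds \<Delta> T (Lab l Ns) \<Longrightarrow> goodD \<Delta> \<Longrightarrow> False"
  unfolding Ty_def by (rule TyR_no_Lab)

lemma Ty_ne: "NE \<Delta> T \<Longrightarrow> Ty \<Delta> i T {M. WNG \<Delta> M}"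
  unfolding Ty_def NE_def by (auto intro: TyR.tNe)

definition cand :: "lctx \<Rightarrow> trm set \<Rightarrow> bool" where
  "cand \<Delta> S \<longleftrightarrow> (\<forall>M\<in>S. WNG \<Delta> M) \<and> (\<forall>M. NE \<Delta> M \<longrightarrow> M \<in> S) \<and> (\<forall>M M'. reds \<Delta> M M' \<longrightarrow> (M \<in> S \<longleftrightarrow> M' \<in> S))"

lemma TyR_cand: "TyR \<Delta> R i T S \<Longrightarrow> goodD \<Delta> \<Longrightarrow> (\<And>j. j < i \<Longrightarrow> R j = Ty \<Delta> j) \<Longrightarrow> cand \<Delta> S"
proof (induction rule: TyR.induct)
  case (tU T j)
  then have e: "{X. \<exists>S. R j X S} = {X. \<exists>S. Ty \<Delta> j X S}" by simp
  show ?case unfolding e cand_def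
    using tU.prems(1) by (auto intro: Ty_WNG Ty_ne Ty_fwd Ty_back)
next
  case (tPi T A B SA F)
  have cA: "cand \<Delta> SA" using tPi by simp
  have cF: "\<forall>a\<in>SA. cand \<Delta> (F a)" using tPi by simp
  show ?case unfolding cand_def
  proof (intro conjI allI impI ballI)
    fix M assume "M \<in> {f. WNG \<Delta> f \<and> (\<forall>a\<in>SA. App f a \<in> F a)}" then show "WNG \<Delta> M" by simp
  next
    fix M assume M: "NE \<Delta> M"
    have "\<forall>a\<in>SA. App M a \<in> F a"
    proof
      fix a assume a: "a \<in> SA"
      then have "WN \<Delta> a" using cA by (auto simp: cand_def intro: WNG_WN)
      then have "NE \<Delta> (App M a)" using M NE_App by blast
      then show "App M a \<in> F a" using cF a by (auto simp: cand_def)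
    qed
    then show "M \<in> {f. WNG \<Delta> f \<and> (\<forall>a\<in>SA. App f a \<in> F a)}" using M by (simp add: NE_WNG)
  next
    fix M M' assume r: "reds \<Delta> M M'"
    have "WNG \<Delta> M \<longleftrightarrow> WNG \<Delta> M'" using r tPi.prems(1) by (auto intro: WNG_fwd WNG_back)
    moreover have "\<And>a. a \<in> SA \<Longrightarrow> App M a \<in> F a \<longleftrightarrow> App M' a \<in> F a"
    proof -
      fix a assume a: "a \<in> SA"
      have "reds \<Delta> (App M a) (App M' a)" by (rule reds_appL[OF r])
      with cF a show "App M a \<in> F a \<longleftrightarrow> App M' a \<in> F a" by (auto simp: cand_def)
    qed
    ultimately show "M \<in> {f. WNG \<Delta> f \<and> (\<forall>a\<in>SA. App f a \<in> F a)} \<longleftrightarrow> M' \<in> {f. WNG \<Delta> f \<and> (\<forall>a\<in>SA. App f a \<in> F a)}"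
      by auto
  qed
next
  case (tNe T N)
  then show ?case by (auto simp: cand_def NE_WNG intro: WNG_fwd WNG_back)
qed

lemma Ty_cand: "Ty \<Delta> i T S \<Longrightarrow> goodD \<Delta> \<Longrightarrow> cand \<Delta> S"
  unfolding Ty_def by (erule TyR_cand[of \<Delta> "TyUp \<Delta> i" i]) (auto simp: TyUp_eq)

lemma Ty_Pi_intro: "reds \<Delta> T (Pi A B) \<Longrightarrow> Ty \<Delta> i A SA \<Longrightarrow> (\<forall>a\<in>SA. Ty \<Delta> i (subst (inst [a]) B) (F a)) \<Longrightarrow>
        WN \<Delta> B \<Longrightarrow> Ty \<Delta> i T {f. WNG \<Delta> f \<and> (\<forall>a\<in>SA. App f a \<in> F a)}"
  unfolding Ty_def by (rule TyR.tPi)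

lemma Ty_Pi_inv: "Ty \<Delta> i (Pi A0 B0) S \<Longrightarrow> \<exists>A1 B1 SA F. reds \<Delta> (Pi A0 B0) (Pi A1 B1) \<and> Ty \<Delta> i A1 SA \<and>
   (\<forall>a\<in>SA. Ty \<Delta> i (subst (inst [a]) B1) (F a)) \<and> WN \<Delta> B1 \<and> S = {f. WNG \<Delta> f \<and> (\<forall>a\<in>SA. App f a \<in> F a)}"
  unfolding Ty_def by (rule TyR_Pi_inv)




definition ctxc :: "trm list \<Rightarrow> bool" where
  "ctxc \<Gamma> \<longleftrightarrow> (\<forall>j<length \<Gamma>. closedn (length \<Gamma> - Suc j) (\<Gamma> ! j))"

definition goodE :: "lctx \<Rightarrow> bool" where
  "goodE \<Delta> \<longleftrightarrow> goodD \<Delta> \<and> (\<forall>(l, As, A, L, B) \<in> set \<Delta>. closedn (length As) A \<and> closedn (Suc (length As)) B \<and> ctxc (rev As))"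

lemma ctxc_Nil: "ctxc []" by (simp add: ctxc_def)

lemma ctxc_Cons: "ctxc \<Gamma> \<Longrightarrow> closedn (length \<Gamma>) A \<Longrightarrow> ctxc (A # \<Gamma>)"
  unfolding ctxc_def
proof (intro allI impI)
  fix j assume a: "\<forall>j<length \<Gamma>. closedn (length \<Gamma> - Suc j) (\<Gamma> ! j)" "closedn (length \<Gamma>) A"
    and j: "j < length (A # \<Gamma>)"
  show "closedn (length (A # \<Gamma>) - Suc j) ((A # \<Gamma>) ! j)"
    using a j by (cases j) auto
qed

lemma syn:
  shows "typing \<Delta> \<Gamma> M T \<Longrightarrow> goodE \<Delta> \<and> ctxc \<Gamma> \<and> closedn (length \<Gamma>) M"
    and "wf \<Delta> \<Gamma> \<Longrightarrow> goodE \<Delta> \<and> ctxc \<Gamma>"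
proof (induction rule: typing_wf.inducts)
  case (t_lab \<Delta> \<Gamma> l As A L B Ms)
  then show ?case by (auto simp: in_set_conv_nth)
next
  case wf_empty
  then show ?case by (simp add: goodE_def goodD_def ctxc_Nil)
next
  case (wf_lab l \<Delta> As A B i L)
  then show ?case by (auto simp: goodE_def goodD_def ctxc_Nil)
next
  case (wf_var \<Delta> \<Gamma> A i)
  then show ?case by (simp add: ctxc_Cons)
qed auto




locale sem =
  fixes D :: lctx
  assumes gE: "goodE D"
begin

lemma gD: "goodD D" using gE by (simp add: goodE_def)

definition semsub :: "(nat \<Rightarrow> trm) \<Rightarrow> trm list \<Rightarrow> bool" where
  "semsub \<sigma> \<Gamma> \<longleftrightarrow> (\<forall>j<length \<Gamma>. \<exists>k S. Ty D k (subst \<sigma> (ren (\<lambda>x. x + Suc j) (\<Gamma> ! j))) S \<and> \<sigma> j \<in> S)"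

definition validE :: "lctx \<Rightarrow> bool" where
  "validE \<Delta>' \<longleftrightarrow> (\<forall>(l, As, A, L, B) \<in> set \<Delta>'.
      (\<forall>\<sigma>. semsub \<sigma> (rev As) \<longrightarrow> (\<exists>k S. Ty D k (subst \<sigma> (Pi A B)) S)) \<and>
      (\<forall>\<sigma>. semsub \<sigma> (A # rev As) \<longrightarrow> (\<exists>k S. Ty D k (subst \<sigma> B) S \<and> subst \<sigma> L \<in> S)))"

lemma semsub_cons:
  assumes "semsub \<sigma> \<Gamma>" "Ty D k (subst \<sigma> A) S" "a \<in> S"
  shows "semsub (scons a \<sigma>) (A # \<Gamma>)"
  unfolding semsub_def
proof (intro allI impI)
  fix j assume j: "j < length (A # \<Gamma>)"
  show "\<exists>k S. Ty D k (subst (scons a \<sigma>) (ren (\<lambda>x. x + Suc j) ((A # \<Gamma>) ! j))) S \<and> scons a \<sigma> j \<in> S"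
  proof (cases j)
    case 0
    have "subst (scons a \<sigma>) (ren (\<lambda>x. x + Suc 0) A) = subst \<sigma> A"
      by (simp add: subst_ren comp_def)
    then show ?thesis using assms 0 by auto
  next
    case (Suc j')
    have "subst (scons a \<sigma>) (ren (\<lambda>x. x + Suc (Suc j')) (\<Gamma> ! j')) = subst \<sigma> (ren (\<lambda>x. x + Suc j') (\<Gamma> ! j'))"
      by (simp add: subst_ren comp_def)
    then show ?thesis using assms(1) Suc j unfolding semsub_def by auto
  qed
qed

lemma semsub_agree:
  assumes "semsub \<sigma> \<Gamma>" "ctxc \<Gamma>" "\<And>j. j < length \<Gamma> \<Longrightarrow> \<tau> j = \<sigma> j"
  shows "semsub \<tau> \<Gamma>"
  unfolding semsub_def
proof (intro allI impI)
  fix j assume j: "j < length \<Gamma>"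
  have c: "closedn (length \<Gamma> - Suc j) (\<Gamma> ! j)" using assms(2) j by (simp add: ctxc_def)
  have "subst \<tau> (ren (\<lambda>x. x + Suc j) (\<Gamma> ! j)) = subst (\<tau> \<circ> (\<lambda>x. x + Suc j)) (\<Gamma> ! j)" by (simp add: subst_ren)
  also have "\<dots> = subst (\<sigma> \<circ> (\<lambda>x. x + Suc j)) (\<Gamma> ! j)"
    by (rule subst_closed_cong[OF c]) (use assms(3) in auto)
  also have "\<dots> = subst \<sigma> (ren (\<lambda>x. x + Suc j) (\<Gamma> ! j))" by (simp add: subst_ren)
  finally show "\<exists>k S. Ty D k (subst \<tau> (ren (\<lambda>x. x + Suc j) (\<Gamma> ! j))) S \<and> \<tau> j \<in> S"
    using assms(1,3) j unfolding semsub_def by auto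
qed

lemma equiv_sem:
  assumes "equiv \<Delta>' A B" "set \<Delta>' \<subseteq> set D" "Ty D k (subst \<sigma> A) S" "Ty D k' (subst \<sigma> B) S'"
  shows "S = S'"
  using assms(1)
proof (cases rule: equiv.cases)
  case (common L)
  then have "joinable D (subst \<sigma> A) (subst \<sigma> B)" using assms(2) gD
    by (auto simp: joinable_def intro!: reds_subst dest: reds_mono)
  then show ?thesis using Ty_det assms(3,4) gD by blast
next
  case (eta1 l Ns M' As A' N B')
  then have "reds D A (Lab l Ns)" using assms(2) by (auto dest: reds_mono)
  then have "reds D (subst \<sigma> A) (subst \<sigma> (Lab l Ns))" using gD by (rule reds_subst)
  then show ?thesis using Ty_no_Lab assms(3) gD by (simp, blast)
next
  case (eta2 l Ns M' As A' N B')
  then have "reds D B (Lab l Ns)" using assms(2) by (auto dest: reds_mono)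
  then have "reds D (subst \<sigma> B) (subst \<sigma> (Lab l Ns))" using gD by (rule reds_subst)
  then show ?thesis using Ty_no_Lab assms(4) gD by (simp, blast)
qed

lemma Var0_ren: "subst (scons (Var 0) \<sigma>) B = ren (\<lambda>j. case j of 0 \<Rightarrow> 0 | Suc k \<Rightarrow> k) (subst (up \<sigma>) B)"
proof -
  have "ren (\<lambda>j. case j of 0 \<Rightarrow> 0 | Suc k \<Rightarrow> k) \<circ> up \<sigma> = scons (Var 0) \<sigma>"
  proof
    fix j show "(ren (\<lambda>j. case j of 0 \<Rightarrow> 0 | Suc k \<Rightarrow> k) \<circ> up \<sigma>) j = scons (Var 0) \<sigma> j"
    proof (cases j)
      case (Suc k)
      have "(\<lambda>j. case j of 0 \<Rightarrow> 0 | Suc k \<Rightarrow> k) \<circ> Suc = (\<lambda>x. x)" by auto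
      then show ?thesis using Suc by (simp add: lift_def ren_ren ren_id)
    qed simp
  qed
  then show ?thesis by (simp add: ren_subst)
qed

lemma Var0_in: "Ty D k T S \<Longrightarrow> Var 0 \<in> S"
  using Ty_cand[of D k T S] gD NE_Var by (auto simp: cand_def)

end




context sem begin

lemma fund:
  shows "typing \<Delta>' \<Gamma> M T \<Longrightarrow> set \<Delta>' \<subseteq> set D \<Longrightarrow>
           validE \<Delta>' \<and> (\<forall>\<sigma>. semsub \<sigma> \<Gamma> \<longrightarrow> (\<exists>k S. Ty D k (subst \<sigma> T) S \<and> subst \<sigma> M \<in> S))"
    and "wf \<Delta>' \<Gamma> \<Longrightarrow> set \<Delta>' \<subseteq> set D \<Longrightarrow> validE \<Delta>'"
proof (induction rule: typing_wf.inducts)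
  case (t_var i \<Gamma> \<Delta>)
  then show ?case by (auto simp: semsub_def)
next
  case (t_univ \<Delta> \<Gamma> i)
  have "Ty D (Suc (Suc i)) (U (Suc i)) {X. \<exists>S. Ty D (Suc i) X S}" by (rule Ty_U) auto
  moreover have "Ty D (Suc i) (U i) {X. \<exists>S. Ty D i X S}" by (rule Ty_U) auto
  ultimately show ?case using t_univ by auto
next
  case (t_pi \<Delta> \<Gamma> A i B j)
  have V: "validE \<Delta>" using t_pi by blast
  have IHA: "\<forall>\<sigma>. semsub \<sigma> \<Gamma> \<longrightarrow> (\<exists>k S. Ty D k (U i) S \<and> subst \<sigma> A \<in> S)" using t_pi by auto
  have IHB: "\<forall>\<sigma>. semsub \<sigma> (A # \<Gamma>) \<longrightarrow> (\<exists>k S. Ty D k (U j) S \<and> subst \<sigma> B \<in> S)" using t_pi by auto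
  have "\<exists>k S. Ty D k (U (max i j)) S \<and> subst \<sigma> (Pi A B) \<in> S" if ss: "semsub \<sigma> \<Gamma>" for \<sigma>
  proof -
    define m where "m = max i j"
    obtain SA where TA: "Ty D i (subst \<sigma> A) SA"
      using IHA ss by (auto dest!: Ty_U_inv)
    have hB: "\<exists>S. Ty D j (subst (scons a \<sigma>) B) S" if a: "a \<in> SA" for a
    proof -
      have "semsub (scons a \<sigma>) (A # \<Gamma>)" using semsub_cons[OF ss TA a] .
      then show ?thesis using IHB by (auto dest!: Ty_U_inv)
    qed
    define F where "F a = (SOME S. Ty D j (subst (scons a \<sigma>) B) S)" for a
    have TF: "\<forall>a\<in>SA. Ty D m (subst (inst [a]) (subst (up \<sigma>) B)) (F a)"
    proof
      fix a assume a: "a \<in> SA"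
      have "Ty D j (subst (scons a \<sigma>) B) (F a)" unfolding F_def using hB[OF a] by (rule someI_ex)
      then show "Ty D m (subst (inst [a]) (subst (up \<sigma>) B)) (F a)"
        by (simp add: subst_inst_up m_def Ty_cum)
    qed
    have WNB: "WN D (subst (up \<sigma>) B)"
    proof -
      have "Var 0 \<in> SA" using TA by (rule Var0_in)
      then obtain S where "Ty D j (subst (scons (Var 0) \<sigma>) B) S" using hB by blast
      then have "WN D (subst (scons (Var 0) \<sigma>) B)" by (intro WNG_WN Ty_WNG)
      then show ?thesis unfolding Var0_ren using gD by (rule WN_ren_reflect)
    qed
    have TAm: "Ty D m (subst \<sigma> A) SA" using TA by (simp add: m_def Ty_cum)
    have "Ty D m (subst \<sigma> (Pi A B)) {f. WNG D f \<and> (\<forall>a\<in>SA. App f a \<in> F a)}"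
      using Ty_Pi_intro[OF reds_refl TAm TF WNB] by simp
    moreover have "Ty D (Suc m) (U m) {X. \<exists>S. Ty D m X S}" by (rule Ty_U) auto
    ultimately show ?thesis unfolding m_def by auto
  qed
  then show ?case using V by auto
next
  case (t_app \<Delta> \<Gamma> M A B N)
  have V: "validE \<Delta>" using t_app by blast
  have IHM: "\<forall>\<sigma>. semsub \<sigma> \<Gamma> \<longrightarrow> (\<exists>k S. Ty D k (subst \<sigma> (Pi A B)) S \<and> subst \<sigma> M \<in> S)" using t_app by auto
  have IHN: "\<forall>\<sigma>. semsub \<sigma> \<Gamma> \<longrightarrow> (\<exists>k S. Ty D k (subst \<sigma> A) S \<and> subst \<sigma> N \<in> S)" using t_app by auto
  have "\<exists>k S. Ty D k (subst \<sigma> (subst (inst [N]) B)) S \<and> subst \<sigma> (App M N) \<in> S" if ss: "semsub \<sigma> \<Gamma>" for \<sigma>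
  proof -
    obtain k Sf where Tf: "Ty D k (Pi (subst \<sigma> A) (subst (up \<sigma>) B)) Sf" and Mf: "subst \<sigma> M \<in> Sf"
      using IHM ss by auto
    obtain A1 B1 SA F where r: "reds D (Pi (subst \<sigma> A) (subst (up \<sigma>) B)) (Pi A1 B1)" and TA1: "Ty D k A1 SA"
      and TF: "\<forall>a\<in>SA. Ty D k (subst (inst [a]) B1) (F a)" and Sf: "Sf = {f. WNG D f \<and> (\<forall>a\<in>SA. App f a \<in> F a)}"
      using Ty_Pi_inv[OF Tf] by blast
    from reds_Pi_inv[OF r] have rA: "reds D (subst \<sigma> A) A1" and rB: "reds D (subst (up \<sigma>) B) B1" by auto
    obtain k' SA' where TA': "Ty D k' (subst \<sigma> A) SA'" and Nin: "subst \<sigma> N \<in> SA'" using IHN ss by auto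
    have "SA' = SA" using Ty_det[OF TA' TA1 reds_joinable[OF rA] gD] .
    then have Nin': "subst \<sigma> N \<in> SA" using Nin by simp
    then have "App (subst \<sigma> M) (subst \<sigma> N) \<in> F (subst \<sigma> N)" using Mf Sf by auto
    moreover have "Ty D k (subst \<sigma> (subst (inst [N]) B)) (F (subst \<sigma> N))"
    proof -
      have "subst \<sigma> (subst (inst [N]) B) = subst (inst [subst \<sigma> N]) (subst (up \<sigma>) B)"
        by (simp add: subst_inst_single subst_inst_up)
      moreover have "reds D (subst (inst [subst \<sigma> N]) (subst (up \<sigma>) B)) (subst (inst [subst \<sigma> N]) B1)"
        using rB gD by (rule reds_subst)
      ultimately show ?thesis using TF Nin' by (auto intro: Ty_back)
    qed
    ultimately show ?thesis by auto
  qed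
  then show ?case using V by auto
next
  case (t_conv \<Delta> \<Gamma> M A B i)
  have V: "validE \<Delta>" using t_conv by blast
  have IHM: "\<forall>\<sigma>. semsub \<sigma> \<Gamma> \<longrightarrow> (\<exists>k S. Ty D k (subst \<sigma> A) S \<and> subst \<sigma> M \<in> S)" using t_conv by auto
  have IHB: "\<forall>\<sigma>. semsub \<sigma> \<Gamma> \<longrightarrow> (\<exists>k S. Ty D k (U i) S \<and> subst \<sigma> B \<in> S)" using t_conv by auto
  have "\<exists>k S. Ty D k (subst \<sigma> B) S \<and> subst \<sigma> M \<in> S" if ss: "semsub \<sigma> \<Gamma>" for \<sigma>
  proof -
    obtain k S where T1: "Ty D k (subst \<sigma> A) S" "subst \<sigma> M \<in> S" using IHM ss by auto
    obtain S' where T2: "Ty D i (subst \<sigma> B) S'" using IHB ss by (auto dest!: Ty_U_inv)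
    have "S = S'" using equiv_sem[OF t_conv.hyps(2) t_conv.prems T1(1) T2] .
    then show ?thesis using T1 T2 by auto
  qed
  then show ?case using V by auto
next
  case (t_lab \<Delta> \<Gamma> l As A L B Ms)
  have sub: "set \<Delta> \<subseteq> set D" using t_lab.prems .
  have V: "validE \<Delta>" using t_lab sub by blast
  have memD: "(l, As, A, L, B) \<in> set \<Delta>" using t_lab by blast
  then have mem: "(l, As, A, L, B) \<in> set D" using sub by blast
  have len: "length Ms = length As" using t_lab by blast
  have IHk: "\<exists>kk S. Ty D kk (subst \<sigma> (subst (inst (take k Ms)) (As ! k))) S \<and> subst \<sigma> (Ms ! k) \<in> S"
    if "k < length Ms" "semsub \<sigma> \<Gamma>" for k \<sigma>
    using t_lab sub that by blast
  define n where "n = length As"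
  have cA: "closedn n A" and cB: "closedn (Suc n) B" and cAs: "ctxc (rev As)"
    using gE mem by (auto simp: goodE_def n_def)
  have cL: "closedn (Suc n) L" using gD mem by (auto simp: goodD_def n_def)
  have V1: "\<forall>\<sigma>. semsub \<sigma> (rev As) \<longrightarrow> (\<exists>k S. Ty D k (subst \<sigma> (Pi A B)) S)"
    and V2: "\<forall>\<sigma>. semsub \<sigma> (A # rev As) \<longrightarrow> (\<exists>k S. Ty D k (subst \<sigma> B) S \<and> subst \<sigma> L \<in> S)"
    using V memD unfolding validE_def by blast+
  have "\<exists>k S. Ty D k (subst \<sigma> (Pi (subst (inst Ms) A) (subst (up (inst Ms)) B))) S \<and> subst \<sigma> (Lab l Ms) \<in> S"
    if ss: "semsub \<sigma> \<Gamma>" for \<sigma>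
  proof -
    define \<tau> where "\<tau> = (\<lambda>j. subst \<sigma> (inst Ms j))"
    have ss\<tau>: "semsub \<tau> (rev As)"
      unfolding semsub_def
    proof (intro allI impI)
      fix j assume j: "j < length (rev As)"
      define k where "k = n - Suc j"
      have kn: "k < n" using j by (simp add: k_def n_def)
      have e1: "rev As ! j = As ! k" using j by (simp add: rev_nth k_def n_def)
      have e2: "\<tau> j = subst \<sigma> (Ms ! k)" using j len by (simp add: \<tau>_def inst_lt rev_nth k_def n_def)
      have "closedn (length (rev As) - Suc j) (rev As ! j)" using cAs j unfolding ctxc_def by blast
      then have ck: "closedn k (As ! k)" using e1 by (simp add: k_def n_def)
      have "subst \<tau> (ren (\<lambda>x. x + Suc j) (As ! k)) = subst (\<tau> \<circ> (\<lambda>x. x + Suc j)) (As ! k)"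
        by (simp add: subst_ren)
      also have "\<dots> = subst (subst \<sigma> \<circ> inst (take k Ms)) (As ! k)"
      proof (rule subst_closed_cong[OF ck])
        fix x assume x: "x < k"
        have i1: "x + Suc j < length Ms" using x len j by (simp add: k_def n_def)
        have i2: "length Ms - Suc (x + Suc j) = k - Suc x" using x len j by (simp add: k_def n_def)
        have "(\<tau> \<circ> (\<lambda>x. x + Suc j)) x = subst \<sigma> (Ms ! (k - Suc x))"
          using i1 i2 by (simp add: \<tau>_def inst_lt rev_nth)
        moreover have "(subst \<sigma> \<circ> inst (take k Ms)) x = subst \<sigma> (Ms ! (k - Suc x))"
          using x kn len by (simp add: inst_lt rev_nth n_def min_def)
        ultimately show "(\<tau> \<circ> (\<lambda>x. x + Suc j)) x = (subst \<sigma> \<circ> inst (take k Ms)) x" by simp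
      qed
      also have "\<dots> = subst \<sigma> (subst (inst (take k Ms)) (As ! k))" by (simp add: subst_subst)
      finally have e3: "subst \<tau> (ren (\<lambda>x. x + Suc j) (rev As ! j)) = subst \<sigma> (subst (inst (take k Ms)) (As ! k))"
        using e1 by simp
      show "\<exists>kk S. Ty D kk (subst \<tau> (ren (\<lambda>x. x + Suc j) (rev As ! j))) S \<and> \<tau> j \<in> S"
        unfolding e3 e2 using IHk[of k \<sigma>] kn len ss by (simp add: n_def)
    qed
    obtain k0 S0 where T0: "Ty D k0 (subst \<tau> (Pi A B)) S0" using V1 ss\<tau> by blast
    have eqT: "subst \<sigma> (Pi (subst (inst Ms) A) (subst (up (inst Ms)) B)) = subst \<tau> (Pi A B)"
    proof -
      have "Pi (subst (inst Ms) A) (subst (up (inst Ms)) B) = subst (inst Ms) (Pi A B)" by simp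
      then show ?thesis by (simp only: subst_subst \<tau>_def comp_def)
    qed
    have T0': "Ty D k0 (Pi (subst \<tau> A) (subst (up \<tau>) B)) S0" using T0 by simp
    obtain A1 B1 SA F where r: "reds D (Pi (subst \<tau> A) (subst (up \<tau>) B)) (Pi A1 B1)" and TA1: "Ty D k0 A1 SA"
      and TF: "\<forall>a\<in>SA. Ty D k0 (subst (inst [a]) B1) (F a)" and S0: "S0 = {f. WNG D f \<and> (\<forall>a\<in>SA. App f a \<in> F a)}"
      using Ty_Pi_inv[OF T0'] by blast
    from reds_Pi_inv[OF r] have rA: "reds D (subst \<tau> A) A1" and rB: "reds D (subst (up \<tau>) B) B1" by auto
    define \<rho>0 where "\<rho>0 = inst (map (subst \<sigma>) Ms)"
    have agree: "\<rho>0 y = \<tau> y" if "y < n" for y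
      using that len by (simp add: \<rho>0_def \<tau>_def inst_lt rev_map n_def)
    have ss\<rho>: "semsub \<rho>0 (rev As)" using semsub_agree[OF ss\<tau> cAs] agree by (simp add: n_def)
    have eqA: "subst \<rho>0 A = subst \<tau> A" using subst_closed_cong[OF cA] agree by blast
    have WNs: "WNG D (Lab l (map (subst \<sigma>) Ms))"
    proof (rule WNG_Lab, rule ballI)
      fix x assume "x \<in> set (map (subst \<sigma>) Ms)"
      then obtain k where k: "k < length Ms" "x = subst \<sigma> (Ms ! k)" by (auto simp: in_set_conv_nth)
      then obtain kk S where "Ty D kk (subst \<sigma> (subst (inst (take k Ms)) (As ! k))) S" "subst \<sigma> (Ms ! k) \<in> S"
        using IHk[of k \<sigma>] ss by blast
      then show "WN D x" using k Ty_cand[of D kk _ S] gD by (auto simp: cand_def intro: WNG_WN)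
    qed
    have "App (Lab l (map (subst \<sigma>) Ms)) a \<in> F a" if a: "a \<in> SA" for a
    proof -
      have TA: "Ty D k0 (subst \<rho>0 A) SA" using Ty_back[OF TA1] rA eqA by simp
      have ssa: "semsub (scons a \<rho>0) (A # rev As)" by (rule semsub_cons[OF ss\<rho> TA a])
      obtain k2 S2 where T2: "Ty D k2 (subst (scons a \<rho>0) B) S2" and Lin: "subst (scons a \<rho>0) L \<in> S2"
        using V2 ssa by blast
      have eqB: "subst (scons a \<rho>0) B = subst (inst [a]) (subst (up \<tau>) B)"
      proof -
        have "subst (scons a \<rho>0) B = subst (scons a \<tau>) B"
          by (rule subst_closed_cong[OF cB]) (auto simp: agree less_Suc_eq_0_disj)
        then show ?thesis by (simp add: subst_inst_up)
      qed
      have "reds D (subst (scons a \<rho>0) B) (subst (inst [a]) B1)"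
        unfolding eqB using rB gD by (rule reds_subst)
      then have "S2 = F a" using Ty_det[OF T2 _ _ gD] TF a by (meson reds_joinable)
      then have Rin: "subst (inst (map (subst \<sigma>) Ms @ [a])) L \<in> F a"
        using Lin by (simp add: inst_snoc \<rho>0_def)
      have "red D (App (Lab l (map (subst \<sigma>) Ms)) a) (subst (inst (map (subst \<sigma>) Ms @ [a])) L)"
        using mem len by (intro red.beta[of l As A L B]) auto
      moreover have "cand D (F a)" using TF a gD by (auto intro: Ty_cand)
      ultimately show ?thesis using Rin by (auto simp: cand_def dest: red_reds)
    qed
    then have "subst \<sigma> (Lab l Ms) \<in> S0" using WNs S0 by simp
    then show ?thesis using T0 eqT by auto
  qed
  then show ?case using V by auto
next
  case wf_empty
  then show ?case by (simp add: validE_def)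
next
  case (wf_lab l \<Delta> As A B i L)
  have sub: "set \<Delta> \<subseteq> set D" using wf_lab.prems by auto
  have V: "validE \<Delta>" using wf_lab sub by blast
  have I1: "\<forall>\<sigma>. semsub \<sigma> (rev As) \<longrightarrow> (\<exists>k S. Ty D k (U i) S \<and> subst \<sigma> (Pi A B) \<in> S)"
    using wf_lab sub by auto
  have I2: "\<forall>\<sigma>. semsub \<sigma> (A # rev As) \<longrightarrow> (\<exists>k S. Ty D k (subst \<sigma> B) S \<and> subst \<sigma> L \<in> S)"
    using wf_lab sub by auto
  have "\<forall>\<sigma>. semsub \<sigma> (rev As) \<longrightarrow> (\<exists>k S. Ty D k (subst \<sigma> (Pi A B)) S)"
  proof (intro allI impI)
    fix \<sigma> assume "semsub \<sigma> (rev As)"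
    then obtain k S where "Ty D k (U i) S" "subst \<sigma> (Pi A B) \<in> S" using I1 by blast
    then show "\<exists>k S. Ty D k (subst \<sigma> (Pi A B)) S" using Ty_U_inv by blast
  qed
  then show ?case using V I2 by (auto simp: validE_def)
next
  case (wf_var \<Delta> \<Gamma> A i)
  then show ?case by blast
qed

end




lemma red_closed: "red \<Delta> M N \<Longrightarrow> goodD \<Delta> \<Longrightarrow> closedn k M \<Longrightarrow> closedn k N"
proof (induction arbitrary: k rule: red.induct)
  case (beta l As A L B \<Delta> Ms N)
  then have cL: "closedn (Suc (length Ms)) L" by (auto simp: goodD_def)
  show ?case
  proof (rule subst_closed[OF cL])
    fix j assume j: "j < Suc (length Ms)"
    then have j': "j < length (rev (Ms @ [N]))" by simp
    have "inst (Ms @ [N]) j = rev (Ms @ [N]) ! j" using j by (intro inst_lt) simp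
    moreover have "rev (Ms @ [N]) ! j \<in> set (rev (Ms @ [N]))" using j' by (rule nth_mem)
    ultimately have "inst (Ms @ [N]) j \<in> set (Ms @ [N])" by (simp only: set_rev)
    then show "closedn k (inst (Ms @ [N]) j)" using beta.prems by auto
  qed
next
  case (lab k' Ms \<Delta> M' l)
  have cMs: "\<forall>x\<in>set Ms. closedn k x" using lab.prems(2) by simp
  have "Ms ! k' \<in> set Ms" using lab.hyps(1) by (rule nth_mem)
  then have "closedn k (Ms ! k')" using cMs by blast
  then have cM': "closedn k M'" using lab.IH lab.prems(1) by blast
  have "\<forall>x\<in>set (Ms[k' := M']). closedn k x"
  proof
    fix x assume "x \<in> set (Ms[k' := M'])"
    then have "x \<in> insert M' (set Ms)" using set_update_subset_insert[of Ms k' M'] by (rule rev_subsetD)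
    then show "closedn k x" using cMs cM' by blast
  qed
  then show ?case by simp
next
  case (piL \<Delta> A A' B) then show ?case by simp
next
  case (piR \<Delta> B B' A) then show ?case by simp
next
  case (appL \<Delta> A A' B) then show ?case by simp
next
  case (appR \<Delta> B B' A) then show ?case by simp
qed

lemma reds_closed: "reds \<Delta> M N \<Longrightarrow> goodD \<Delta> \<Longrightarrow> closedn k M \<Longrightarrow> closedn k N"
  by (induction rule: reds_induct) (auto intro: red_closed)

lemma ne_not_closed: "ne v \<Longrightarrow> closedn 0 v \<Longrightarrow> False"
  by (induction v rule: ne.induct) auto

theorem theorem3p23:
  assumes "typing \<Delta> [] M A"
  shows "\<exists>v. reds \<Delta> M v \<and> is_value v \<and> irreducible \<Delta> v"
proof -
  have s: "goodE \<Delta>" "closedn 0 M" using syn(1)[OF assms] by auto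
  interpret sem \<Delta> by standard (rule s(1))
  have "semsub Var []" by (simp add: semsub_def)
  then obtain k S where T: "Ty \<Delta> k (subst Var A) S" and MS: "subst Var M \<in> S"
    using fund(1)[OF assms] by blast
  have "WNG \<Delta> M" using Ty_cand[OF T gD] MS by (auto simp: cand_def subst_Var)
  then obtain v where v: "reds \<Delta> M v" "irreducible \<Delta> v" "is_value v \<or> ne v" by (auto simp: WNG_def)
  have "closedn 0 v" using reds_closed[OF v(1) gD s(2)] .
  then have "is_value v" using v(3) ne_not_closed by blast
  then show ?thesis using v by blast
qed


end
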